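(* Let $(\Sigma,\Lambda,\rho,\tau)$ be an orthodiagonal discrete M-curve of genus $g$ (i.e. $\rho_Q\in\mathbb R_{>0}$ for all faces and there are $g+1$ discrete real ovals), and let the blocks of the complete discrete period matrix be taken with respect to a symplectic basis $(a_i,b_i)$ of $H_1(\Sigma,\mathbb Z)$ with $\tau(a_i)=a_i$ and $\tau(b_i)=-b_i$ for all $i$. (i) If $\tau$ is of Type 1, then $\Pi^{B,B}=0=\Pi^{W,W}$, and the complete discrete period matrix $\tilde\Pi$ is purely imaginary. (ii) If $\tau$ is of Type 2, then $\Pi^{B,B}=-\Pi^{W,W}$ and $\Pi^{W,B}=\Pi^{B,W}$; moreover $\Pi^{B,B}$ is a real skew-symmetric matrix and $\Pi^{W,B}=\Pi^{B,W}$ is a purely imaginary symmetric matrix.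
   Context: A discrete Riemann surface $(\Sigma,\Lambda,\rho)$ consists of a compact connected oriented surface $\Sigma$ of genus $g$, a finite strongly regular cellular decomposition $\Lambda$ of $\Sigma$ into quadrilaterals whose 1-skeleton is bipartite with a fixed black/white vertex coloring, and $\rho:F(\Lambda)\to\{z\in\mathbb C:\Re z>0\}$. For a face $Q$ its vertices in counterclockwise order are $b_-,w_-,b_+,w_+$ ($b_\pm$ black, $w_\pm$ white). A discrete antiholomorphic involution is a bijection $\tau:V(\Lambda)\to V(\Lambda)$ with $\tau\circ\tau=\mathrm{id}$, a graph automorphism mapping faces to faces and reversing orientation, and either Type 1: $\tau$ preserves colors and $\rho_{\tau(Q)}=\overline{\rho_Q}$, or Type 2: $\tau$ swaps colors and $\rho_{\tau(Q)}=1/\overline{\rho_Q}$, for all faces $Q$. Then $(\Sigma,\Lambda,\rho,\tau)$ is a discrete real Riemann surface; $\tau$ acts on $H_1(\Sigma,\mathbb Z)$. The fixed point set $\mathrm{fix}(\tau)$ (in the realization of $\Sigma$ by unit squares, one per face) is, in Type 1, the union of fixed vertices, edges mapped to themselves, and for each face $Q=\tau(Q)$ the diagonal joining its two fixed vertices; in Type 2, the union of midpoints of edges mapped to themselves and, for each face $Q=\tau(Q)$, the segment joining the midpoints of the two edges of $Q$ mapped to themselves. Its connected components are the discrete real ovals; a discrete M-curve has $g+1$ of them. A symplectic basis satisfies $\mathrm{int}(a_i,a_j)=0=\mathrm{int}(b_i,b_j)$, $\mathrm{int}(a_i,b_j)=\delta_{ij}$. Medial graph $X$: vertices are midpoints of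 edges of $\Lambda$, adjacent iff the edges share a vertex and lie in a common face; each face $Q$ contains a 4-cycle $F_Q$ of $X$; the edge joining midpoints of $uv$ and $vw$ in $Q$ is black if $u,w$ black, white if $u,w$ white. A discrete one-form is a function $\omega$ on oriented edges of $X$ with $\omega(-e)=-\omega(e)$; type $\Diamond$ means equal values on the two black edges of each $F_Q$ oriented from the $b_-$ side to the $b_+$ side, and likewise for white edges from $w_-$ toward $w_+$; closed means zero sum around each face of $X$ (the cycles $F_Q$ and the cycles $F_v$ around vertices $v$). For $f$ on vertices of $Q$, $df(e)=(f(w)-f(u))/2$ for the edge $e$ from midpoint of $uv$ to midpoint of $vw$; $f$ is discrete holomorphic on $Q$ if $f(w_+)-f(w_-)=i\rho_Q(f(b_+)-f(b_-))$. A discrete holomorphic differential is a closed type-$\Diamond$ one-form that on each $F_Q$ equals $df$ for some $f$ discrete holomorphic on $Q$. For a closed path $P$ on $X$, $BP$/$WP$ are its oriented black/white edges. Known fact: discrete holomorphic differentials are uniquely determined by arbitrary prescribed black and white $a$-periods $2\int_{B\alpha_k}\omega$, $2\int_{W\alpha_k}\omega$. With paths $\alpha_k,\beta_k$ on $X$ representing $a_k,b_k$: $\omega^B_k$ has black $a_j$-periods $\delta_{jk}$ and zero white $a$-periods, $\omega^W_k$ has white $a_j$-periods $\delta_{jk}$ and zero black ones; $\Pi^{B,B}_{jk}=2\int_{B\beta_j}\omega^B_k$, $\Pi^{W,B}_{jk}=2\int_{W\beta_j}\omega^B_k$, $\Pi^{B,W}_{jk}=2\int_{B\beta_j}\omega^W_k$,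 $\Pi^{W,W}_{jk}=2\int_{W\beta_j}\omega^W_k$, $\tilde\Pi=\begin{pmatrix}\Pi^{B,W}&\Pi^{B,B}\\ \Pi^{W,W}&\Pi^{W,B}\end{pmatrix}$. Known facts: $\tilde\Pi$ is symmetric; in the orthodiagonal case $\Pi^{W,B},\Pi^{B,W}$ are purely imaginary and $\Pi^{B,B},\Pi^{W,W}$ are real. *)

theory Defs
  imports Complex_Main
begin

section \<open>Combinatorial model of a discrete Riemann surface (quad decomposition)\<close>

text \<open>A face Q is given by its four corners c Q 0, c Q 1, c Q 2, c Q 3 in counterclockwise
order, namely b_-, w_-, b_+, w_+. Indices are read modulo 4.\<close>

definition crn :: "('f \<Rightarrow> nat \<Rightarrow> 'v) \<Rightarrow> 'f \<Rightarrow> nat \<Rightarrow> 'v" where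
  "crn c Q i = c Q (i mod 4)"

definition corners :: "('f \<Rightarrow> nat \<Rightarrow> 'v) \<Rightarrow> 'f \<Rightarrow> 'v set" where
  "corners c Q = crn c Q ` {..<4}"

definition lam_edges :: "'f set \<Rightarrow> ('f \<Rightarrow> nat \<Rightarrow> 'v) \<Rightarrow> 'v set set" where
  "lam_edges F c = {{crn c Q i, crn c Q (Suc i)} | Q i. Q \<in> F \<and> i < (4::nat)}"

text \<open>Corners (flags) at a vertex and the rotation relation between consecutive faces around it.\<close>
definition flags_at :: "'f set \<Rightarrow> ('f \<Rightarrow> nat \<Rightarrow> 'v) \<Rightarrow> 'v \<Rightarrow> ('f \<times> nat) set" where
  "flags_at F c v = {(Q, i). Q \<in> F \<and> i < 4 \<and> crn c Q i = v}"

definition rot_rel :: "'f set \<Rightarrow> ('f \<Rightarrow> nat \<Rightarrow> 'v) \<Rightarrow> 'v \<Rightarrow> (('f \<times> nat) \<times> ('f \<times> nat)) set" where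
  "rot_rel F c v = {((Q, i), (Q', j)). (Q, i) \<in> flags_at F c v \<and> (Q', j) \<in> flags_at F c v \<and>
                       crn c Q' (Suc j) = crn c Q (i + 3)}"

text \<open>Finite strongly regular cellular decomposition of a compact connected oriented surface
into quadrilaterals with bipartite 1-skeleton and black/white colouring.\<close>
definition quad_surface :: "'v set \<Rightarrow> 'f set \<Rightarrow> ('f \<Rightarrow> nat \<Rightarrow> 'v) \<Rightarrow> ('v \<Rightarrow> bool) \<Rightarrow> bool" where
  "quad_surface V F c black \<longleftrightarrow>
     finite V \<and> finite F \<and> F \<noteq> {} \<and>
     (\<forall>Q\<in>F. \<forall>i<4. c Q i \<in> V) \<and>
     (\<forall>Q\<in>F. inj_on (c Q) {..<4}) \<and>
     (\<forall>Q\<in>F. black (c Q 0) \<and> \<not> black (c Q 1) \<and> black (c Q 2) \<and> \<not> black (c Q 3)) \<and>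
     \<comment> \<open>each oriented edge bounds exactly one face on its left ...\<close>
     (\<forall>Q\<in>F. \<forall>Q'\<in>F. \<forall>i<4. \<forall>j<4.
        crn c Q i = crn c Q' j \<and> crn c Q (Suc i) = crn c Q' (Suc j) \<longrightarrow> Q = Q' \<and> i = j) \<and>
     \<comment> \<open>... and its reverse bounds a face too (closed oriented surface)\<close>
     (\<forall>Q\<in>F. \<forall>i<4. \<exists>Q'\<in>F. \<exists>j<4. crn c Q' j = crn c Q (Suc i) \<and> crn c Q' (Suc j) = crn c Q i) \<and>
     (\<forall>v\<in>V. flags_at F c v \<noteq> {}) \<and>
     \<comment> \<open>vertex links are single cycles (manifold condition)\<close>
     (\<forall>v\<in>V. \<forall>x\<in>flags_at F c v. \<forall>y\<in>flags_at F c v. (x, y) \<in> (rot_rel F c v)\<^sup>*) \<and>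
     \<comment> \<open>strong regularity: two distinct faces meet in nothing, a vertex, or an edge\<close>
     (\<forall>Q\<in>F. \<forall>Q'\<in>F. Q \<noteq> Q' \<longrightarrow>
        corners c Q \<inter> corners c Q' = {} \<or> (\<exists>v. corners c Q \<inter> corners c Q' = {v}) \<or>
        (\<exists>i<4. corners c Q \<inter> corners c Q' = {crn c Q i, crn c Q (Suc i)})) \<and>
     \<comment> \<open>connectedness\<close>
     (\<forall>u\<in>V. \<forall>w\<in>V. (u, w) \<in> {(x, y). {x, y} \<in> lam_edges F c}\<^sup>*)"

definition discrete_riemann_surface ::
  "'v set \<Rightarrow> 'f set \<Rightarrow> ('f \<Rightarrow> nat \<Rightarrow> 'v) \<Rightarrow> ('v \<Rightarrow> bool) \<Rightarrow> ('f \<Rightarrow> complex) \<Rightarrow> bool" where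
  "discrete_riemann_surface V F c black rho \<longleftrightarrow>
     quad_surface V F c black \<and> (\<forall>Q\<in>F. Re (rho Q) > 0)"

definition has_genus :: "'v set \<Rightarrow> 'f set \<Rightarrow> ('f \<Rightarrow> nat \<Rightarrow> 'v) \<Rightarrow> nat \<Rightarrow> bool" where
  "has_genus V F c g \<longleftrightarrow>
     int (card V) - int (card (lam_edges F c)) + int (card F) = 2 - 2 * int g"

definition orthodiagonal :: "'f set \<Rightarrow> ('f \<Rightarrow> complex) \<Rightarrow> bool" where
  "orthodiagonal F rho \<longleftrightarrow> (\<forall>Q\<in>F. rho Q \<in> \<real>)"

definition is_type1 :: "'v set \<Rightarrow> 'f set \<Rightarrow> ('f \<Rightarrow> nat \<Rightarrow> 'v) \<Rightarrow> ('v \<Rightarrow> bool) \<Rightarrow> ('f \<Rightarrow> complex)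
    \<Rightarrow> ('v \<Rightarrow> 'v) \<Rightarrow> bool" where
  "is_type1 V F c black rho tau \<longleftrightarrow>
     (\<forall>v\<in>V. black (tau v) = black v) \<and>
     (\<forall>Q\<in>F. \<forall>Q'\<in>F. tau ` corners c Q = corners c Q' \<longrightarrow> rho Q' = cnj (rho Q))"

definition is_type2 :: "'v set \<Rightarrow> 'f set \<Rightarrow> ('f \<Rightarrow> nat \<Rightarrow> 'v) \<Rightarrow> ('v \<Rightarrow> bool) \<Rightarrow> ('f \<Rightarrow> complex)
    \<Rightarrow> ('v \<Rightarrow> 'v) \<Rightarrow> bool" where
  "is_type2 V F c black rho tau \<longleftrightarrow>
     (\<forall>v\<in>V. black (tau v) = (\<not> black v)) \<and>
     (\<forall>Q\<in>F. \<forall>Q'\<in>F. tau ` corners c Q = corners c Q' \<longrightarrow> rho Q' = 1 / cnj (rho Q))"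

text \<open>An involutive graph automorphism of V mapping faces to faces with reversed cyclic order.\<close>
definition antihol_involution :: "'v set \<Rightarrow> 'f set \<Rightarrow> ('f \<Rightarrow> nat \<Rightarrow> 'v) \<Rightarrow> ('v \<Rightarrow> bool)
    \<Rightarrow> ('f \<Rightarrow> complex) \<Rightarrow> ('v \<Rightarrow> 'v) \<Rightarrow> bool" where
  "antihol_involution V F c black rho tau \<longleftrightarrow>
     (\<forall>v\<in>V. tau v \<in> V \<and> tau (tau v) = v) \<and>
     (\<forall>Q\<in>F. \<exists>Q'\<in>F. \<exists>k<4. \<forall>i<4. tau (crn c Q i) = crn c Q' (k + 4 - i)) \<and>
     (is_type1 V F c black rho tau \<or> is_type2 V F c black rho tau)"

section \<open>Discrete real ovals (components of the fixed point set)\<close>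

definition fix_nodes1 :: "'v set \<Rightarrow> ('v \<Rightarrow> 'v) \<Rightarrow> 'v set" where
  "fix_nodes1 V tau = {v \<in> V. tau v = v}"

definition fix_adj1 :: "'v set \<Rightarrow> 'f set \<Rightarrow> ('f \<Rightarrow> nat \<Rightarrow> 'v) \<Rightarrow> ('v \<Rightarrow> 'v) \<Rightarrow> ('v \<times> 'v) set" where
  "fix_adj1 V F c tau = {(u, w). u \<in> fix_nodes1 V tau \<and> w \<in> fix_nodes1 V tau \<and>
      ({u, w} \<in> lam_edges F c \<or>
       (\<exists>Q\<in>F. tau ` corners c Q = corners c Q \<and> u \<in> corners c Q \<and> w \<in> corners c Q))}"

text \<open>Type 2: invariant edges (their midpoints), joined through invariant faces.\<close>
definition fix_nodes2 :: "'f set \<Rightarrow> ('f \<Rightarrow> nat \<Rightarrow> 'v) \<Rightarrow> ('v \<Rightarrow> 'v) \<Rightarrow> 'v set set" where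
  "fix_nodes2 F c tau = {e \<in> lam_edges F c. tau ` e = e}"

definition fix_adj2 :: "'f set \<Rightarrow> ('f \<Rightarrow> nat \<Rightarrow> 'v) \<Rightarrow> ('v \<Rightarrow> 'v) \<Rightarrow> ('v set \<times> 'v set) set" where
  "fix_adj2 F c tau = {(e1, e2). e1 \<in> fix_nodes2 F c tau \<and> e2 \<in> fix_nodes2 F c tau \<and>
      (\<exists>Q\<in>F. tau ` corners c Q = corners c Q \<and> e1 \<subseteq> corners c Q \<and> e2 \<subseteq> corners c Q)}"

definition num_real_ovals :: "'v set \<Rightarrow> 'f set \<Rightarrow> ('f \<Rightarrow> nat \<Rightarrow> 'v) \<Rightarrow> ('v \<Rightarrow> bool)
    \<Rightarrow> ('f \<Rightarrow> complex) \<Rightarrow> ('v \<Rightarrow> 'v) \<Rightarrow> nat" where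
  "num_real_ovals V F c black rho tau =
     (if is_type1 V F c black rho tau
      then card (fix_nodes1 V tau // (fix_adj1 V F c tau)\<^sup>*)
      else card (fix_nodes2 F c tau // (fix_adj2 F c tau)\<^sup>*))"

section \<open>Medial graph X: oriented edges, closed paths, chains, homology\<close>

text \<open>The edge of X at corner i of face Q joins the midpoints of the edges
  {c Q (i-1), c Q i} and {c Q i, c Q (i+1)}. An oriented X-edge is (Q, i, s), where s = True
  means counterclockwise in Q (from the first midpoint to the second).\<close>
type_synonym 'f xedge = "'f \<times> nat \<times> bool"

fun xstart :: "('f \<Rightarrow> nat \<Rightarrow> 'v) \<Rightarrow> 'f xedge \<Rightarrow> 'v set" where
  "xstart c (Q, i, s) = (if s then {crn c Q (i + 3), crn c Q i} else {crn c Q i, crn c Q (Suc i)})"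

fun xend :: "('f \<Rightarrow> nat \<Rightarrow> 'v) \<Rightarrow> 'f xedge \<Rightarrow> 'v set" where
  "xend c (Q, i, s) = (if s then {crn c Q i, crn c Q (Suc i)} else {crn c Q (i + 3), crn c Q i})"

definition closed_X_path :: "'f set \<Rightarrow> ('f \<Rightarrow> nat \<Rightarrow> 'v) \<Rightarrow> 'f xedge list \<Rightarrow> bool" where
  "closed_X_path F c P \<longleftrightarrow> P \<noteq> [] \<and> (\<forall>(Q, i, s) \<in> set P. Q \<in> F \<and> i < 4) \<and>
     (\<forall>k < length P. xend c (P ! k) = xstart c (P ! (Suc k mod length P)))"

fun is_black_xedge :: "('f \<Rightarrow> nat \<Rightarrow> 'v) \<Rightarrow> ('v \<Rightarrow> bool) \<Rightarrow> 'f xedge \<Rightarrow> bool" where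
  "is_black_xedge c black (Q, i, s) \<longleftrightarrow> black (crn c Q (i + 3)) \<and> black (crn c Q (Suc i))"

fun is_white_xedge :: "('f \<Rightarrow> nat \<Rightarrow> 'v) \<Rightarrow> ('v \<Rightarrow> bool) \<Rightarrow> 'f xedge \<Rightarrow> bool" where
  "is_white_xedge c black (Q, i, s) \<longleftrightarrow> \<not> black (crn c Q (i + 3)) \<and> \<not> black (crn c Q (Suc i))"

text \<open>A discrete one-form is stored by its values on counterclockwise oriented X-edges:
  omega Q i for i < 4; the value on the reversed edge is the negative.\<close>
fun xval :: "('f \<Rightarrow> nat \<Rightarrow> complex) \<Rightarrow> 'f xedge \<Rightarrow> complex" where
  "xval \<omega> (Q, i, s) = (if s then \<omega> Q i else - \<omega> Q i)"

text \<open>Black and white periods 2 \<integral>_{BP} omega and 2 \<integral>_{WP} omega.\<close>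
definition bper :: "('f \<Rightarrow> nat \<Rightarrow> 'v) \<Rightarrow> ('v \<Rightarrow> bool) \<Rightarrow> 'f xedge list \<Rightarrow> ('f \<Rightarrow> nat \<Rightarrow> complex) \<Rightarrow> complex" where
  "bper c black P \<omega> = 2 * (\<Sum>e\<leftarrow>P. if is_black_xedge c black e then xval \<omega> e else 0)"

definition wper :: "('f \<Rightarrow> nat \<Rightarrow> 'v) \<Rightarrow> ('v \<Rightarrow> bool) \<Rightarrow> 'f xedge list \<Rightarrow> ('f \<Rightarrow> nat \<Rightarrow> complex) \<Rightarrow> complex" where
  "wper c black P \<omega> = 2 * (\<Sum>e\<leftarrow>P. if is_white_xedge c black e then xval \<omega> e else 0)"

text \<open>Integer 1-chains on X (coefficient of the ccw X-edge at corner i of Q, i < 4).\<close>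
type_synonym 'f xchain = "'f \<Rightarrow> nat \<Rightarrow> int"

definition path_chain :: "'f xedge list \<Rightarrow> 'f xchain" where
  "path_chain P = (\<lambda>Q i. \<Sum>e\<leftarrow>P. (if e = (Q, i, True) then 1 else if e = (Q, i, False) then -1 else 0))"

definition X_cycle :: "'f set \<Rightarrow> ('f \<Rightarrow> nat \<Rightarrow> 'v) \<Rightarrow> 'f xchain \<Rightarrow> bool" where
  "X_cycle F c ch \<longleftrightarrow> (\<forall>e. (\<Sum>Q\<in>F. \<Sum>i<4.
       (if {crn c Q i, crn c Q (Suc i)} = e then ch Q i else 0)
     - (if {crn c Q (i + 3), crn c Q i} = e then ch Q i else 0)) = 0)"

text \<open>Homology of the cell decomposition of the surface by X (faces F_Q and F_v):
  two chains are homologous iff they differ by an integer combination of face boundaries.\<close>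
definition homologous :: "'f set \<Rightarrow> ('f \<Rightarrow> nat \<Rightarrow> 'v) \<Rightarrow> 'f xchain \<Rightarrow> 'f xchain \<Rightarrow> bool" where
  "homologous F c ch1 ch2 \<longleftrightarrow>
     (\<exists>n :: 'f \<Rightarrow> int. \<exists>m :: 'v \<Rightarrow> int. \<forall>Q\<in>F. \<forall>i<4. ch1 Q i - ch2 Q i = n Q + m (crn c Q i))"

text \<open>Push-forward of chains by tau (orientation reversing on faces).\<close>
definition tau_push :: "'f set \<Rightarrow> ('f \<Rightarrow> nat \<Rightarrow> 'v) \<Rightarrow> ('v \<Rightarrow> 'v) \<Rightarrow> 'f xchain \<Rightarrow> 'f xchain" where
  "tau_push F c tau ch = (\<lambda>Q' j. - (\<Sum>Q\<in>F. \<Sum>i<4.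
       if tau ` corners c Q = corners c Q' \<and> tau (crn c Q i) = crn c Q' j then ch Q i else 0))"

text \<open>Intersection number of two X-cycles: the second cycle is pushed (homotopically) onto the
  graph with vertices V and F and edges v--Q (vertex-face incidences), by sliding midpoints
  of edges to their black endpoints; the X-edge at corner i of Q crosses exactly the
  incidence edge (c Q i)--Q once.\<close>
definition int_num :: "'f set \<Rightarrow> ('f \<Rightarrow> nat \<Rightarrow> 'v) \<Rightarrow> ('v \<Rightarrow> bool) \<Rightarrow> 'f xchain \<Rightarrow> 'f xchain \<Rightarrow> int" where
  "int_num F c black ch1 ch2 = (\<Sum>Q\<in>F. \<Sum>i<4. ch1 Q i *
      (if black (crn c Q i) then ch2 Q ((i + 1) mod 4) - ch2 Q ((i + 3) mod 4) else 0))"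

definition lincomb :: "nat \<Rightarrow> (nat \<Rightarrow> 'f xedge list) \<Rightarrow> (nat \<Rightarrow> 'f xedge list)
    \<Rightarrow> (nat \<Rightarrow> int) \<Rightarrow> (nat \<Rightarrow> int) \<Rightarrow> 'f xchain" where
  "lincomb g \<alpha> \<beta> p q = (\<lambda>Q i. \<Sum>k<g. p k * path_chain (\<alpha> k) Q i + q k * path_chain (\<beta> k) Q i)"

definition symplectic_X_basis :: "'f set \<Rightarrow> ('f \<Rightarrow> nat \<Rightarrow> 'v) \<Rightarrow> ('v \<Rightarrow> bool) \<Rightarrow> nat
    \<Rightarrow> (nat \<Rightarrow> 'f xedge list) \<Rightarrow> (nat \<Rightarrow> 'f xedge list) \<Rightarrow> bool" where
  "symplectic_X_basis F c black g \<alpha> \<beta> \<longleftrightarrow>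
     (\<forall>k<g. closed_X_path F c (\<alpha> k) \<and> closed_X_path F c (\<beta> k)) \<and>
     (\<forall>ch. X_cycle F c ch \<longrightarrow> (\<exists>p q. homologous F c ch (lincomb g \<alpha> \<beta> p q))) \<and>
     (\<forall>p q. homologous F c (lincomb g \<alpha> \<beta> p q) (\<lambda>_ _. 0) \<longrightarrow> (\<forall>k<g. p k = 0 \<and> q k = 0)) \<and>
     (\<forall>j<g. \<forall>k<g.
        int_num F c black (path_chain (\<alpha> j)) (path_chain (\<alpha> k)) = 0 \<and>
        int_num F c black (path_chain (\<beta> j)) (path_chain (\<beta> k)) = 0 \<and>
        int_num F c black (path_chain (\<alpha> j)) (path_chain (\<beta> k)) = (if j = k then 1 else 0))"

definition type_diamond :: "'f set \<Rightarrow> ('f \<Rightarrow> nat \<Rightarrow> complex) \<Rightarrow> bool" where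
  "type_diamond F \<omega> \<longleftrightarrow> (\<forall>Q\<in>F. \<omega> Q 1 = - \<omega> Q 3 \<and> \<omega> Q 2 = - \<omega> Q 0)"

definition closed_form :: "'v set \<Rightarrow> 'f set \<Rightarrow> ('f \<Rightarrow> nat \<Rightarrow> 'v) \<Rightarrow> ('f \<Rightarrow> nat \<Rightarrow> complex) \<Rightarrow> bool" where
  "closed_form V F c \<omega> \<longleftrightarrow>
     (\<forall>Q\<in>F. (\<Sum>i<4. \<omega> Q i) = 0) \<and>
     (\<forall>v\<in>V. (\<Sum>Q\<in>F. \<Sum>i<4. if crn c Q i = v then \<omega> Q i else 0) = 0)"

definition disc_holo_on :: "('f \<Rightarrow> nat \<Rightarrow> 'v) \<Rightarrow> ('f \<Rightarrow> complex) \<Rightarrow> 'f \<Rightarrow> ('v \<Rightarrow> complex) \<Rightarrow> bool" where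
  "disc_holo_on c rho Q f \<longleftrightarrow> f (c Q 3) - f (c Q 1) = \<i> * rho Q * (f (c Q 2) - f (c Q 0))"

definition disc_holo_diff :: "'v set \<Rightarrow> 'f set \<Rightarrow> ('f \<Rightarrow> nat \<Rightarrow> 'v) \<Rightarrow> ('f \<Rightarrow> complex)
    \<Rightarrow> ('f \<Rightarrow> nat \<Rightarrow> complex) \<Rightarrow> bool" where
  "disc_holo_diff V F c rho \<omega> \<longleftrightarrow>
     type_diamond F \<omega> \<and> closed_form V F c \<omega> \<and>
     (\<forall>Q\<in>F. \<exists>f :: 'v \<Rightarrow> complex. disc_holo_on c rho Q f \<and>
        (\<forall>i<4. \<omega> Q i = (f (crn c Q (Suc i)) - f (crn c Q (i + 3))) / 2))"

end

theory Submission
  imports Defs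
begin

definition ms :: "('f \<Rightarrow> nat \<Rightarrow> 'v) \<Rightarrow> 'f \<Rightarrow> nat \<Rightarrow> 'v set" where
  "ms c Q i = {crn c Q (i + 3), crn c Q i}"
definition me :: "('f \<Rightarrow> nat \<Rightarrow> 'v) \<Rightarrow> 'f \<Rightarrow> nat \<Rightarrow> 'v set" where
  "me c Q i = {crn c Q i, crn c Q (Suc i)}"

definition bd :: "'f set \<Rightarrow> ('f \<Rightarrow> nat \<Rightarrow> 'v) \<Rightarrow> ('f \<Rightarrow> nat \<Rightarrow> 'a::ab_group_add) \<Rightarrow> 'v set \<Rightarrow> 'a" where
  "bd F c ch e = (\<Sum>Q\<in>F. \<Sum>i<4. (if me c Q i = e then ch Q i else 0) - (if ms c Q i = e then ch Q i else 0))"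

lemma X_cycle_bd: "X_cycle F c ch \<longleftrightarrow> (\<forall>e. bd F c ch e = 0)"
  unfolding X_cycle_def bd_def ms_def me_def by simp

definition PB :: "'f set \<Rightarrow> ('f \<Rightarrow> nat \<Rightarrow> int) \<Rightarrow> ('f \<Rightarrow> complex) \<Rightarrow> complex" where
  "PB F ch u = (\<Sum>Q\<in>F. of_int (ch Q 1 - ch Q 3) * u Q)"
definition PW :: "'f set \<Rightarrow> ('f \<Rightarrow> nat \<Rightarrow> int) \<Rightarrow> ('f \<Rightarrow> complex) \<Rightarrow> complex" where
  "PW F ch u = (\<Sum>Q\<in>F. of_int (ch Q 2 - ch Q 0) * u Q)"

definition piW :: "('f \<Rightarrow> nat \<Rightarrow> int) \<Rightarrow> 'f \<Rightarrow> complex" where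
  "piW ch Q = of_int (ch Q 2 - ch Q 0)"
definition piB :: "('f \<Rightarrow> nat \<Rightarrow> int) \<Rightarrow> 'f \<Rightarrow> complex" where
  "piB ch Q = of_int (ch Q 1 - ch Q 3)"

definition cocB :: "'v set \<Rightarrow> 'f set \<Rightarrow> ('f \<Rightarrow> nat \<Rightarrow> 'v) \<Rightarrow> ('f \<Rightarrow> complex) \<Rightarrow> bool" where
  "cocB V F c u \<longleftrightarrow> (\<forall>v\<in>V. (\<Sum>Q\<in>F. (if c Q 1 = v then u Q else 0) - (if c Q 3 = v then u Q else 0)) = 0)"
definition cocW :: "'v set \<Rightarrow> 'f set \<Rightarrow> ('f \<Rightarrow> nat \<Rightarrow> 'v) \<Rightarrow> ('f \<Rightarrow> complex) \<Rightarrow> bool" where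
  "cocW V F c u \<longleftrightarrow> (\<forall>v\<in>V. (\<Sum>Q\<in>F. (if c Q 2 = v then u Q else 0) - (if c Q 0 = v then u Q else 0)) = 0)"

definition dB :: "('f \<Rightarrow> nat \<Rightarrow> complex) \<Rightarrow> 'f \<Rightarrow> complex" where "dB \<omega> Q = 2 * \<omega> Q 1"
definition dW :: "('f \<Rightarrow> nat \<Rightarrow> complex) \<Rightarrow> 'f \<Rightarrow> complex" where "dW \<omega> Q = 2 * \<omega> Q 2"

lemma crn_simps[simp]:
  "crn c Q 0 = c Q 0" "crn c Q 1 = c Q 1" "crn c Q 2 = c Q 2" "crn c Q 3 = c Q 3"
  "crn c Q 4 = c Q 0" "crn c Q 5 = c Q 1" "crn c Q 6 = c Q 2" "crn c Q (Suc 0) = c Q 1"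
  by (simp_all add: crn_def)

lemma crn_simps2[simp]:
  "crn c Q (Suc (Suc 0)) = c Q 2" "crn c Q (Suc (Suc (Suc 0))) = c Q 3" "crn c Q (Suc (Suc (Suc (Suc 0)))) = c Q 0"
proof -
  have a: "Suc (Suc 0) = 2" "Suc (Suc (Suc 0)) = 3" "Suc (Suc (Suc (Suc 0))) = 4" by simp_all
  show "crn c Q (Suc (Suc 0)) = c Q 2" "crn c Q (Suc (Suc (Suc 0))) = c Q 3" "crn c Q (Suc (Suc (Suc (Suc 0)))) = c Q 0"
    unfolding a by simp_all
qed

lemma mods4: "(0+1::nat) mod 4 = 1" "(0+3::nat) mod 4 = 3" "(1+1::nat) mod 4 = 2" "(1+3::nat) mod 4 = 0"
  "(2+1::nat) mod 4 = 3" "(2+3::nat) mod 4 = 1" "(3+1::nat) mod 4 = 0" "(3+3::nat) mod 4 = 2"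
  by simp_all

lemma less4: "(i::nat) < 4 \<longleftrightarrow> i = 0 \<or> i = 1 \<or> i = 2 \<or> i = 3" by auto

lemma sum4: "(\<Sum>i<(4::nat). f i) = f 0 + f 1 + f 2 + (f 3 :: 'a::comm_monoid_add)"
  by (simp add: eval_nat_numeral add.commute add.left_commute)

locale qs =
  fixes V :: "'v set" and F :: "'f set" and c :: "'f \<Rightarrow> nat \<Rightarrow> 'v" and black :: "'v \<Rightarrow> bool"
  assumes qs: "quad_surface V F c black"
begin

lemma finV: "finite V" and finF: "finite F"
  using qs by (auto simp: quad_surface_def)

lemma cV: "Q \<in> F \<Longrightarrow> i < 4 \<Longrightarrow> c Q i \<in> V"
  using qs by (auto simp: quad_surface_def)

lemma cV4: "Q \<in> F \<Longrightarrow> c Q 0 \<in> V \<and> c Q 1 \<in> V \<and> c Q 2 \<in> V \<and> c Q 3 \<in> V"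
  using cV by auto

lemma col: "Q \<in> F \<Longrightarrow> black (c Q 0) \<and> \<not> black (c Q 1) \<and> black (c Q 2) \<and> \<not> black (c Q 3)"
  using qs by (auto simp: quad_surface_def)

lemma injc: "Q \<in> F \<Longrightarrow> inj_on (c Q) {..<4}"
  using qs by (auto simp: quad_surface_def)

lemma distinct: assumes "Q \<in> F"
  shows "c Q 0 \<noteq> c Q 1" "c Q 0 \<noteq> c Q 2" "c Q 0 \<noteq> c Q 3" "c Q 1 \<noteq> c Q 2" "c Q 1 \<noteq> c Q 3" "c Q 2 \<noteq> c Q 3"
proof -
  have h: "\<And>i j. i<4 \<Longrightarrow> j<4 \<Longrightarrow> c Q i = c Q j \<Longrightarrow> i = j" using injc[OF assms] by (auto simp: inj_on_def)
  show "c Q 0 \<noteq> c Q 1" "c Q 0 \<noteq> c Q 2" "c Q 0 \<noteq> c Q 3" "c Q 1 \<noteq> c Q 2" "c Q 1 \<noteq> c Q 3" "c Q 2 \<noteq> c Q 3"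
    using h[of 0 1] h[of 0 2] h[of 0 3] h[of 1 2] h[of 1 3] h[of 2 3] by auto
qed

lemma edge_uniq: "Q \<in> F \<Longrightarrow> Q' \<in> F \<Longrightarrow> i < 4 \<Longrightarrow> j < 4 \<Longrightarrow> crn c Q i = crn c Q' j \<Longrightarrow>
   crn c Q (Suc i) = crn c Q' (Suc j) \<Longrightarrow> Q = Q' \<and> i = j"
  using qs unfolding quad_surface_def by blast

end

lemma PB_add: "PB F (\<lambda>Q i. a Q i + b Q i) u = PB F a u + PB F b u"
  unfolding PB_def sum.distrib[symmetric] by (rule sum.cong) (auto simp: algebra_simps)
lemma PW_add: "PW F (\<lambda>Q i. a Q i + b Q i) u = PW F a u + PW F b u"
  unfolding PW_def sum.distrib[symmetric] by (rule sum.cong) (auto simp: algebra_simps)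

lemma path_chain_Cons: "path_chain (e # P) = (\<lambda>Q i. (if e = (Q, i, True) then 1 else if e = (Q, i, False) then -1 else 0) + path_chain P Q i)"
  by (simp add: path_chain_def)

lemma path_chain_Nil: "path_chain [] = (\<lambda>Q i. 0)"
  by (simp add: path_chain_def)

context qs begin

lemma PB_single:
  assumes "Q0 \<in> F" "i0 < 4" "type_diamond F \<omega>"
  shows "PB F (\<lambda>Q i. if (Q0, i0, s) = (Q, i, True) then 1 else if (Q0, i0, s) = (Q, i, False) then -1 else 0) (dB \<omega>)
       = 2 * (if is_black_xedge c black (Q0, i0, s) then xval \<omega> (Q0, i0, s) else 0)"
proof -
  let ?t = "of_int ((if (Q0, i0, s) = (Q0, 1, True) then 1 else if (Q0, i0, s) = (Q0, 1, False) then -1 else 0)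
     - (if (Q0, i0, s) = (Q0, 3, True) then 1 else if (Q0, i0, s) = (Q0, 3, False) then -1 else 0)) * dB \<omega> Q0"
  have "PB F (\<lambda>Q i. if (Q0, i0, s) = (Q, i, True) then 1 else if (Q0, i0, s) = (Q, i, False) then -1 else 0) (dB \<omega>)
     = (\<Sum>Q\<in>F. if Q = Q0 then ?t else 0)"
    unfolding PB_def by (rule sum.cong) auto
  also have "\<dots> = ?t" using assms(1) by (subst sum.delta[OF finF]) simp
  also have "\<dots> = 2 * (if is_black_xedge c black (Q0, i0, s) then xval \<omega> (Q0, i0, s) else 0)"
    using assms(2) col[OF assms(1)] assms(3)[unfolded type_diamond_def, rule_format, OF assms(1)] unfolding dB_def less4
    by (cases s; elim disjE; simp)
  finally show ?thesis .
qed

lemma PW_single: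
  assumes "Q0 \<in> F" "i0 < 4" "type_diamond F \<omega>"
  shows "PW F (\<lambda>Q i. if (Q0, i0, s) = (Q, i, True) then 1 else if (Q0, i0, s) = (Q, i, False) then -1 else 0) (dW \<omega>)
       = 2 * (if is_white_xedge c black (Q0, i0, s) then xval \<omega> (Q0, i0, s) else 0)"
proof -
  let ?t = "of_int ((if (Q0, i0, s) = (Q0, 2, True) then 1 else if (Q0, i0, s) = (Q0, 2, False) then -1 else 0)
     - (if (Q0, i0, s) = (Q0, 0, True) then 1 else if (Q0, i0, s) = (Q0, 0, False) then -1 else 0)) * dW \<omega> Q0"
  have "PW F (\<lambda>Q i. if (Q0, i0, s) = (Q, i, True) then 1 else if (Q0, i0, s) = (Q, i, False) then -1 else 0) (dW \<omega>)
     = (\<Sum>Q\<in>F. if Q = Q0 then ?t else 0)"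
    unfolding PW_def by (rule sum.cong) auto
  also have "\<dots> = ?t" using assms(1) by (subst sum.delta[OF finF]) simp
  also have "\<dots> = 2 * (if is_white_xedge c black (Q0, i0, s) then xval \<omega> (Q0, i0, s) else 0)"
    using assms(2) col[OF assms(1)] assms(3)[unfolded type_diamond_def, rule_format, OF assms(1)] unfolding dW_def less4
    by (cases s; elim disjE; simp)
  finally show ?thesis .
qed

lemma bper_PB:
  assumes "\<forall>(Q, i, s)\<in>set P. Q \<in> F \<and> i < 4" "type_diamond F \<omega>"
  shows "bper c black P \<omega> = PB F (path_chain P) (dB \<omega>)"
  using assms(1)
proof (induction P)
  case Nil
  then show ?case by (simp add: bper_def PB_def path_chain_Nil)
next
  case (Cons e P)
  obtain Q0 i0 s where e: "e = (Q0, i0, s)" by (cases e) auto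
  have h: "Q0 \<in> F" "i0 < 4" using Cons.prems e by auto
  have "bper c black (e # P) \<omega> = 2 * (if is_black_xedge c black e then xval \<omega> e else 0) + bper c black P \<omega>"
    by (simp add: bper_def algebra_simps)
  also have "bper c black P \<omega> = PB F (path_chain P) (dB \<omega>)" using Cons by auto
  finally show ?case
    unfolding path_chain_Cons PB_add using PB_single[OF h assms(2), of s] unfolding e by simp
qed

lemma wper_PW:
  assumes "\<forall>(Q, i, s)\<in>set P. Q \<in> F \<and> i < 4" "type_diamond F \<omega>"
  shows "wper c black P \<omega> = PW F (path_chain P) (dW \<omega>)"
  using assms(1)
proof (induction P)
  case Nil
  then show ?case by (simp add: wper_def PW_def path_chain_Nil)
next
  case (Cons e P)
  obtain Q0 i0 s where e: "e = (Q0, i0, s)" by (cases e) auto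
  have h: "Q0 \<in> F" "i0 < 4" using Cons.prems e by auto
  have "wper c black (e # P) \<omega> = 2 * (if is_white_xedge c black e then xval \<omega> e else 0) + wper c black P \<omega>"
    by (simp add: wper_def algebra_simps)
  also have "wper c black P \<omega> = PW F (path_chain P) (dW \<omega>)" using Cons by auto
  finally show ?case
    unfolding path_chain_Cons PW_add using PW_single[OF h assms(2), of s] unfolding e by simp
qed

end

lemma bd_add: "bd F c (\<lambda>Q i. a Q i + b Q i) e = bd F c a e + bd F c b e"
proof -
  have "\<And>Q i. (if me c Q i = e then a Q i + b Q i else 0) - (if ms c Q i = e then a Q i + b Q i else 0) = ((if me c Q i = e then a Q i else 0) - (if ms c Q i = e then a Q i else 0)) + ((if me c Q i = e then b Q i else 0) - (if ms c Q i = e then b Q i else 0))"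
    by (auto simp: algebra_simps)
  then show ?thesis unfolding bd_def by (simp add: sum.distrib)
qed

lemma sum_shift_mod: "(\<Sum>t<n. g (Suc t mod n)) = (\<Sum>t<n. (g t :: 'a::comm_monoid_add))"
proof (cases n)
  case 0 then show ?thesis by simp
next
  case (Suc m)
  have "(\<Sum>t<Suc m. g (Suc t mod Suc m)) = (\<Sum>t<m. g (Suc t mod Suc m)) + g (Suc m mod Suc m)"
    by simp
  also have "(\<Sum>t<m. g (Suc t mod Suc m)) = (\<Sum>t<m. g (Suc t))"
    by (rule sum.cong) auto
  also have "g (Suc m mod Suc m) = g 0" by simp
  also have "(\<Sum>t<m. g (Suc t)) + g 0 = sum g {..<Suc m}"
    by (subst sum.lessThan_Suc_shift) (simp add: add.commute)
  finally show ?thesis using Suc by simp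
qed

context qs begin

lemma bd_single:
  assumes "Q0 \<in> F" "i0 < 4"
  shows "bd F c (\<lambda>Q i. if (Q0, i0, s) = (Q, i, True) then 1 else if (Q0, i0, s) = (Q, i, False) then -1 else (0::int)) e
     = (if xend c (Q0, i0, s) = e then 1 else 0) - (if xstart c (Q0, i0, s) = e then 1 else 0)"
proof -
  let ?X = "(if me c Q0 i0 = e then (if s then 1 else -1) else 0) - (if ms c Q0 i0 = e then (if s then 1 else -1) else (0::int))"
  have pw: "\<And>Q i. (if me c Q i = e then (if (Q0, i0, s) = (Q, i, True) then 1 else if (Q0, i0, s) = (Q, i, False) then -1 else (0::int)) else 0)
     - (if ms c Q i = e then (if (Q0, i0, s) = (Q, i, True) then 1 else if (Q0, i0, s) = (Q, i, False) then -1 else (0::int)) else 0)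
     = (if Q = Q0 then (if i = i0 then ?X else 0) else 0)"
    by (cases s) auto
  have "bd F c (\<lambda>Q i. if (Q0, i0, s) = (Q, i, True) then 1 else if (Q0, i0, s) = (Q, i, False) then -1 else (0::int)) e
     = (\<Sum>Q\<in>F. if Q = Q0 then (\<Sum>i<4. if i = i0 then ?X else 0) else 0)"
    unfolding bd_def pw by (intro sum.cong refl) auto
  also have "\<dots> = (if me c Q0 i0 = e then (if s then 1 else -1) else 0) - (if ms c Q0 i0 = e then (if s then 1 else -1) else 0)"
    using assms by (simp add: sum.delta[OF finF])
  also have "\<dots> = (if xend c (Q0, i0, s) = e then 1 else 0) - (if xstart c (Q0, i0, s) = e then 1 else 0)"
    by (auto simp: me_def ms_def)
  finally show ?thesis .
qed

lemma bd_path_chain: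
  assumes "\<forall>(Q, i, s)\<in>set P. Q \<in> F \<and> i < 4"
  shows "bd F c (path_chain P) e = (\<Sum>x\<leftarrow>P. (if xend c x = e then 1 else 0) - (if xstart c x = e then 1 else 0))"
  using assms
proof (induction P)
  case Nil
  then show ?case by (simp add: bd_def path_chain_Nil)
next
  case (Cons x P)
  obtain Q0 i0 s where x: "x = (Q0, i0, s)" by (cases x) auto
  have h: "Q0 \<in> F" "i0 < 4" using Cons.prems x by auto
  show ?case unfolding path_chain_Cons bd_add using Cons bd_single[OF h, of s e] unfolding x by simp
qed

lemma closed_path_cycle:
  assumes "closed_X_path F c P"
  shows "X_cycle F c (path_chain P)"
proof -
  have P: "\<forall>(Q, i, s)\<in>set P. Q \<in> F \<and> i < 4" and cl: "\<forall>k < length P. xend c (P ! k) = xstart c (P ! (Suc k mod length P))"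
    using assms by (auto simp: closed_X_path_def)
  have "bd F c (path_chain P) e = 0" for e
  proof -
    have "bd F c (path_chain P) e = (\<Sum>t<length P. (if xend c (P!t) = e then 1 else 0) - (if xstart c (P!t) = e then 1 else 0))"
      unfolding bd_path_chain[OF P] by (simp add: sum_list_sum_nth atLeast0LessThan)
    also have "\<dots> = (\<Sum>t<length P. (if xstart c (P!(Suc t mod length P)) = e then 1 else 0) - (if xstart c (P!t) = e then 1 else 0))"
      by (rule sum.cong) (use cl in auto)
    also have "\<dots> = 0"
      unfolding sum_subtractf sum_shift_mod[of "\<lambda>t. if xstart c (P!t) = e then 1 else 0"] by simp
    finally show ?thesis .
  qed
  then show ?thesis by (simp add: X_cycle_bd)
qed

lemma homol_PB:
  assumes "cocB V F c u" "homologous F c ch1 ch2"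
  shows "PB F ch1 u = PB F ch2 u"
proof -
  obtain n m where nm: "\<forall>Q\<in>F. \<forall>i<4. ch1 Q i - ch2 Q i = n Q + m (crn c Q i)"
    using assms(2) by (auto simp: homologous_def)
  have "PB F ch1 u - PB F ch2 u = (\<Sum>Q\<in>F. of_int (m (c Q 1) - m (c Q 3)) * u Q)"
    unfolding PB_def sum_subtractf[symmetric]
  proof (rule sum.cong)
    fix Q assume Q: "Q \<in> F"
    have nQ: "\<forall>i<4. ch1 Q i - ch2 Q i = n Q + m (crn c Q i)" using nm Q by blast
    have "ch1 Q 1 - ch2 Q 1 = n Q + m (c Q 1)" "ch1 Q 3 - ch2 Q 3 = n Q + m (c Q 3)"
      using nQ[rule_format, of 1] nQ[rule_format, of 3] by simp_all
    then have "(ch1 Q 1 - ch1 Q 3) - (ch2 Q 1 - ch2 Q 3) = m (c Q 1) - m (c Q 3)" by simp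
    then show "of_int (ch1 Q 1 - ch1 Q 3) * u Q - of_int (ch2 Q 1 - ch2 Q 3) * u Q = of_int (m (c Q 1) - m (c Q 3)) * u Q"
      by (metis left_diff_distrib of_int_diff)
  qed simp
  also have "\<dots> = (\<Sum>Q\<in>F. \<Sum>v\<in>V. of_int (m v) * ((if c Q 1 = v then u Q else 0) - (if c Q 3 = v then u Q else 0)))"
  proof (rule sum.cong)
    fix Q assume Q: "Q \<in> F"
    have "(\<Sum>v\<in>V. of_int (m v) * ((if c Q 1 = v then u Q else 0) - (if c Q 3 = v then u Q else 0)))
      = (\<Sum>v\<in>V. (if c Q 1 = v then of_int (m v) * u Q else 0)) - (\<Sum>v\<in>V. (if c Q 3 = v then of_int (m v) * u Q else 0))"
      unfolding sum_subtractf[symmetric] by (rule sum.cong) auto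
    also have "\<dots> = of_int (m (c Q 1)) * u Q - of_int (m (c Q 3)) * u Q"
      using cV4[OF Q] by (simp add: sum.delta'[OF finV])
    finally show "of_int (m (c Q 1) - m (c Q 3)) * u Q = (\<Sum>v\<in>V. of_int (m v) * ((if c Q 1 = v then u Q else 0) - (if c Q 3 = v then u Q else 0)))"
      by (simp add: algebra_simps)
  qed simp
  also have "\<dots> = (\<Sum>v\<in>V. of_int (m v) * (\<Sum>Q\<in>F. (if c Q 1 = v then u Q else 0) - (if c Q 3 = v then u Q else 0)))"
    by (subst sum.swap) (simp add: sum_distrib_left)
  also have "\<dots> = 0" using assms(1) by (simp add: cocB_def)
  finally show ?thesis by simp
qed

lemma homol_PW:
  assumes "cocW V F c u" "homologous F c ch1 ch2"
  shows "PW F ch1 u = PW F ch2 u"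
proof -
  obtain n m where nm: "\<forall>Q\<in>F. \<forall>i<4. ch1 Q i - ch2 Q i = n Q + m (crn c Q i)"
    using assms(2) by (auto simp: homologous_def)
  have "PW F ch1 u - PW F ch2 u = (\<Sum>Q\<in>F. of_int (m (c Q 2) - m (c Q 0)) * u Q)"
    unfolding PW_def sum_subtractf[symmetric]
  proof (rule sum.cong)
    fix Q assume Q: "Q \<in> F"
    have nQ: "\<forall>i<4. ch1 Q i - ch2 Q i = n Q + m (crn c Q i)" using nm Q by blast
    have "ch1 Q 2 - ch2 Q 2 = n Q + m (c Q 2)" "ch1 Q 0 - ch2 Q 0 = n Q + m (c Q 0)"
      using nQ[rule_format, of 2] nQ[rule_format, of 0] by simp_all
    then have "(ch1 Q 2 - ch1 Q 0) - (ch2 Q 2 - ch2 Q 0) = m (c Q 2) - m (c Q 0)" by simp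
    then show "of_int (ch1 Q 2 - ch1 Q 0) * u Q - of_int (ch2 Q 2 - ch2 Q 0) * u Q = of_int (m (c Q 2) - m (c Q 0)) * u Q"
      by (metis left_diff_distrib of_int_diff)
  qed simp
  also have "\<dots> = (\<Sum>Q\<in>F. \<Sum>v\<in>V. of_int (m v) * ((if c Q 2 = v then u Q else 0) - (if c Q 0 = v then u Q else 0)))"
  proof (rule sum.cong)
    fix Q assume Q: "Q \<in> F"
    have "(\<Sum>v\<in>V. of_int (m v) * ((if c Q 2 = v then u Q else 0) - (if c Q 0 = v then u Q else 0)))
      = (\<Sum>v\<in>V. (if c Q 2 = v then of_int (m v) * u Q else 0)) - (\<Sum>v\<in>V. (if c Q 0 = v then of_int (m v) * u Q else 0))"
      unfolding sum_subtractf[symmetric] by (rule sum.cong) auto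
    also have "\<dots> = of_int (m (c Q 2)) * u Q - of_int (m (c Q 0)) * u Q"
      using cV4[OF Q] by (simp add: sum.delta'[OF finV])
    finally show "of_int (m (c Q 2) - m (c Q 0)) * u Q = (\<Sum>v\<in>V. of_int (m v) * ((if c Q 2 = v then u Q else 0) - (if c Q 0 = v then u Q else 0)))"
      by (simp add: algebra_simps)
  qed simp
  also have "\<dots> = (\<Sum>v\<in>V. of_int (m v) * (\<Sum>Q\<in>F. (if c Q 2 = v then u Q else 0) - (if c Q 0 = v then u Q else 0)))"
    by (subst sum.swap) (simp add: sum_distrib_left)
  also have "\<dots> = 0" using assms(1) by (simp add: cocW_def)
  finally show ?thesis by simp
qed

end

definition sg :: "nat \<Rightarrow> int" where "sg i = (if even i then 1 else -1)"
definition ind :: "'a \<Rightarrow> 'a \<Rightarrow> int" where "ind x y = (if x = y then 1 else 0)"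

lemma crn_mod: "crn c Q (i mod 4) = crn c Q i" by (simp add: crn_def)
lemma crn_4: "crn c Q (i + 4) = crn c Q i" by (simp add: crn_def)

context qs begin

lemma col_crn: assumes "Q \<in> F" shows "black (crn c Q j) \<longleftrightarrow> even j"
proof -
  have "j mod 4 < 4" by simp
  then have "j mod 4 = 0 \<or> j mod 4 = 1 \<or> j mod 4 = 2 \<or> j mod 4 = 3" by linarith
  moreover have "even j \<longleftrightarrow> even (j mod 4)" by presburger
  ultimately show ?thesis using col[OF assms] unfolding crn_def by auto
qed

lemma edge_uniq': assumes "Q \<in> F" "Q' \<in> F" "crn c Q j = crn c Q' j'" "crn c Q (Suc j) = crn c Q' (Suc j')"
  shows "Q = Q'"
proof -
  have "crn c Q (Suc (j mod 4)) = crn c Q (Suc j)" "crn c Q' (Suc (j' mod 4)) = crn c Q' (Suc j')"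
    by (simp_all add: crn_def mod_Suc_eq)
  then show ?thesis using edge_uniq[OF assms(1,2), of "j mod 4" "j' mod 4"] assms(3,4) by (simp add: crn_mod)
qed

lemma lam_me: "Q \<in> F \<Longrightarrow> i < 4 \<Longrightarrow> me c Q i \<in> lam_edges F c"
  unfolding me_def lam_edges_def by blast

lemma lam_ms: assumes "Q \<in> F" "i < 4" shows "ms c Q i \<in> lam_edges F c"
proof -
  have "ms c Q i = {crn c Q ((i + 3) mod 4), crn c Q (Suc ((i + 3) mod 4))}"
    unfolding ms_def crn_def by (simp add: mod_Suc_eq insert_commute)
  then show ?thesis unfolding lam_edges_def using assms by fastforce
qed

lemma fin_lam: "finite (lam_edges F c)"
proof -
  have "lam_edges F c = (\<lambda>(Q, i). {crn c Q i, crn c Q (Suc i)}) ` (F \<times> {..<4})"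
    unfolding lam_edges_def by auto
  then show ?thesis using finF by simp
qed

lemma cyc_vertex:
  assumes cyc: "X_cycle F c ch" and v: "v \<in> V"
  shows "(\<Sum>Q\<in>F. \<Sum>i<4. ch Q i * ((if v \<in> me c Q i then 1 else 0) - (if v \<in> ms c Q i then 1 else 0))) = (0::int)"
proof -
  let ?E = "{e \<in> lam_edges F c. v \<in> e}"
  have finE: "finite ?E" using fin_lam by simp
  have "0 = (\<Sum>e\<in>?E. bd F c ch e)" using cyc by (simp add: X_cycle_bd)
  also have "\<dots> = (\<Sum>Q\<in>F. \<Sum>i<4. \<Sum>e\<in>?E. (if me c Q i = e then ch Q i else 0) - (if ms c Q i = e then ch Q i else 0))"
    unfolding bd_def by (subst sum.swap, rule sum.cong, simp, subst sum.swap, simp)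
  also have "\<dots> = (\<Sum>Q\<in>F. \<Sum>i<4. (if me c Q i \<in> ?E then ch Q i else 0) - (if ms c Q i \<in> ?E then ch Q i else 0))"
    by (intro sum.cong refl) (simp add: sum_subtractf sum.delta'[OF finE])
  also have "\<dots> = (\<Sum>Q\<in>F. \<Sum>i<4. ch Q i * ((if v \<in> me c Q i then 1 else 0) - (if v \<in> ms c Q i then 1 else 0)))"
    by (intro sum.cong refl) (auto simp: lam_me lam_ms)
  finally show ?thesis by simp
qed

lemma face_expand:
  assumes Q: "Q \<in> F"
  shows "(\<Sum>i<4. ch Q i * ((if v \<in> me c Q i then 1 else 0) - (if v \<in> ms c Q i then 1 else 0)))
    = ch Q 0 * (ind (c Q 1) v - ind (c Q 3) v) + ch Q 1 * (ind (c Q 2) v - ind (c Q 0) v)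
    + ch Q 2 * (ind (c Q 3) v - ind (c Q 1) v) + ch Q 3 * (ind (c Q 0) v - ind (c Q 2) v)"
  using distinct[OF Q] unfolding sum4 me_def ms_def ind_def by auto

lemma piW_cocB: assumes "X_cycle F c ch" shows "cocB V F c (piW ch)"
  unfolding cocB_def
proof
  fix v assume v: "v \<in> V"
  show "(\<Sum>Q\<in>F. (if c Q 1 = v then piW ch Q else 0) - (if c Q 3 = v then piW ch Q else 0)) = 0"
  proof (cases "black v")
    case True
    then show ?thesis using col by (intro sum.neutral) auto
  next
    case False
    have pw: "(if c Q 1 = v then piW ch Q else 0) - (if c Q 3 = v then piW ch Q else 0) = - of_int (\<Sum>i<4. ch Q i * ((if v \<in> me c Q i then 1 else 0) - (if v \<in> ms c Q i then 1 else 0)))" if Q: "Q \<in> F" for Q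
    proof -
      have "c Q 0 \<noteq> v" "c Q 2 \<noteq> v" using col[OF Q] False by auto
      then show ?thesis unfolding face_expand[OF Q] piW_def by (auto simp: ind_def algebra_simps)
    qed
    have "(\<Sum>Q\<in>F. (if c Q 1 = v then piW ch Q else 0) - (if c Q 3 = v then piW ch Q else 0))
      = (\<Sum>Q\<in>F. - of_int (\<Sum>i<4. ch Q i * ((if v \<in> me c Q i then 1 else 0) - (if v \<in> ms c Q i then 1 else 0))))"
      by (rule sum.cong[OF refl]) (rule pw)
    also have "\<dots> = - of_int (\<Sum>Q\<in>F. \<Sum>i<4. ch Q i * ((if v \<in> me c Q i then 1 else 0) - (if v \<in> ms c Q i then 1 else 0)))"
      by (simp add: sum_negf of_int_sum)
    also have "\<dots> = 0" using cyc_vertex[OF assms v] by simp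
    finally show ?thesis .
  qed
qed

lemma piB_cocW: assumes "X_cycle F c ch" shows "cocW V F c (piB ch)"
  unfolding cocW_def
proof
  fix v assume v: "v \<in> V"
  show "(\<Sum>Q\<in>F. (if c Q 2 = v then piB ch Q else 0) - (if c Q 0 = v then piB ch Q else 0)) = 0"
  proof (cases "black v")
    case False
    then show ?thesis using col by (intro sum.neutral) auto
  next
    case True
    have pw: "(if c Q 2 = v then piB ch Q else 0) - (if c Q 0 = v then piB ch Q else 0) = of_int (\<Sum>i<4. ch Q i * ((if v \<in> me c Q i then 1 else 0) - (if v \<in> ms c Q i then 1 else 0)))" if Q: "Q \<in> F" for Q
    proof -
      have "c Q 1 \<noteq> v" "c Q 3 \<noteq> v" using col[OF Q] True by auto
      then show ?thesis unfolding face_expand[OF Q] piB_def by (auto simp: ind_def algebra_simps)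
    qed
    have "(\<Sum>Q\<in>F. (if c Q 2 = v then piB ch Q else 0) - (if c Q 0 = v then piB ch Q else 0))
      = (\<Sum>Q\<in>F. of_int (\<Sum>i<4. ch Q i * ((if v \<in> me c Q i then 1 else 0) - (if v \<in> ms c Q i then 1 else 0))))"
      by (rule sum.cong[OF refl]) (rule pw)
    also have "\<dots> = of_int (\<Sum>Q\<in>F. \<Sum>i<4. ch Q i * ((if v \<in> me c Q i then 1 else 0) - (if v \<in> ms c Q i then 1 else 0)))"
      by (simp add: of_int_sum)
    also have "\<dots> = 0" using cyc_vertex[OF assms v] by simp
    finally show ?thesis .
  qed
qed

lemma int_num_eq: "int_num F c black ch1 ch2 = (\<Sum>Q\<in>F. (ch1 Q 0 - ch1 Q 2) * (ch2 Q 1 - ch2 Q 3))"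
  unfolding int_num_def
proof (rule sum.cong[OF refl])
  fix Q assume Q: "Q \<in> F"
  show "(\<Sum>i<4. ch1 Q i * (if black (crn c Q i) then ch2 Q ((i + 1) mod 4) - ch2 Q ((i + 3) mod 4) else 0)) =
         (ch1 Q 0 - ch1 Q 2) * (ch2 Q 1 - ch2 Q 3)"
    using col[OF Q] unfolding sum4 mods4 by (simp add: algebra_simps del: One_nat_def)
qed

lemma PB_piW: "PB F ch2 (piW ch1) = - of_int (int_num F c black ch1 ch2)"
  unfolding int_num_eq PB_def piW_def of_int_sum sum_negf[symmetric]
  by (rule sum.cong) (simp_all add: algebra_simps)

lemma PW_piB: "PW F ch2 (piB ch1) = - of_int (int_num F c black ch2 ch1)"
  unfolding int_num_eq PW_def piB_def of_int_sum sum_negf[symmetric]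
  by (rule sum.cong) (simp_all add: algebra_simps)

end

definition Kf :: "('f \<Rightarrow> nat \<Rightarrow> 'v) \<Rightarrow> 'f \<Rightarrow> nat \<Rightarrow> 'f \<Rightarrow> nat \<Rightarrow> int" where
  "Kf c Q i Q' i' = sg i * (ind (me c Q' i') (ms c Q i) - ind (ms c Q' i') (ms c Q i) + ind (me c Q' i') (me c Q i) - ind (ms c Q' i') (me c Q i))
     + sg i' * (ind (me c Q i) (ms c Q' i') - ind (ms c Q i) (ms c Q' i') + ind (me c Q i) (me c Q' i') - ind (ms c Q i) (me c Q' i'))"

definition Tf :: "'f set \<Rightarrow> ('f \<Rightarrow> nat \<Rightarrow> 'v) \<Rightarrow> ('f \<Rightarrow> nat \<Rightarrow> int) \<Rightarrow> ('f \<Rightarrow> nat \<Rightarrow> int) \<Rightarrow> int" where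
  "Tf F c a b = (\<Sum>(Q, i)\<in>F \<times> {..<4}. sg i * b Q i * (bd F c a (ms c Q i) + bd F c a (me c Q i)))"

lemma crn_Suc3: "crn c Q (Suc (i + 3)) = crn c Q i" by (simp add: crn_def)

lemma ind_comm: "ind x y = ind y x" by (auto simp: ind_def)

lemma bd_pairs: "bd F c a x = (\<Sum>(Q', i')\<in>F \<times> {..<4}. (ind (me c Q' i') x - ind (ms c Q' i') x) * a Q' i')"
  unfolding bd_def sum.cartesian_product[symmetric]
  by (intro sum.cong refl) (auto simp: ind_def)

lemma sum_pairs: "(\<Sum>(Q, i)\<in>A \<times> B. h Q i) = (\<Sum>Q\<in>A. \<Sum>i\<in>B. h Q i)"
  by (simp add: sum.cartesian_product)

lemma sum_swap_pairs:
  "(\<Sum>(Q, i)\<in>S. \<Sum>(Q', i')\<in>S. f Q i Q' i') = (\<Sum>(Q, i)\<in>S. \<Sum>(Q', i')\<in>S. f Q' i' Q i)"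
proof -
  have "(\<Sum>(Q, i)\<in>S. \<Sum>(Q', i')\<in>S. f Q i Q' i') = (\<Sum>x\<in>S. \<Sum>y\<in>S. f (fst x) (snd x) (fst y) (snd y))"
    by (simp add: split_def)
  also have "\<dots> = (\<Sum>y\<in>S. \<Sum>x\<in>S. f (fst x) (snd x) (fst y) (snd y))"
    by (rule sum.swap)
  also have "\<dots> = (\<Sum>(Q, i)\<in>S. \<Sum>(Q', i')\<in>S. f Q' i' Q i)"
    by (simp add: split_def)
  finally show ?thesis .
qed

lemma T_sum: "Tf F c a b + Tf F c b a = (\<Sum>(Q, i)\<in>F \<times> {..<4}. \<Sum>(Q', i')\<in>F \<times> {..<4}. b Q i * a Q' i' * Kf c Q i Q' i')"
proof -
  let ?S = "F \<times> {..<4::nat}"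
  have 1: "Tf F c a b = (\<Sum>(Q, i)\<in>?S. \<Sum>(Q', i')\<in>?S. b Q i * a Q' i' * (sg i * (ind (me c Q' i') (ms c Q i) - ind (ms c Q' i') (ms c Q i) + ind (me c Q' i') (me c Q i) - ind (ms c Q' i') (me c Q i))))"
    unfolding Tf_def bd_pairs
    by (intro sum.cong refl) (auto simp: sum_distrib_left sum.distrib[symmetric] algebra_simps intro!: sum.cong)
  have 2: "Tf F c b a = (\<Sum>(Q, i)\<in>?S. \<Sum>(Q', i')\<in>?S. a Q i * b Q' i' * (sg i * (ind (me c Q' i') (ms c Q i) - ind (ms c Q' i') (ms c Q i) + ind (me c Q' i') (me c Q i) - ind (ms c Q' i') (me c Q i))))"
    unfolding Tf_def bd_pairs
    by (intro sum.cong refl) (auto simp: sum_distrib_left sum.distrib[symmetric] algebra_simps intro!: sum.cong)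
  also have "\<dots> = (\<Sum>(Q, i)\<in>?S. \<Sum>(Q', i')\<in>?S. a Q' i' * b Q i * (sg i' * (ind (me c Q i) (ms c Q' i') - ind (ms c Q i) (ms c Q' i') + ind (me c Q i) (me c Q' i') - ind (ms c Q i) (me c Q' i'))))"
    by (rule sum_swap_pairs)
  finally have 3: "Tf F c b a = (\<Sum>(Q, i)\<in>?S. \<Sum>(Q', i')\<in>?S. a Q' i' * b Q i * (sg i' * (ind (me c Q i) (ms c Q' i') - ind (ms c Q i) (ms c Q' i') + ind (me c Q i) (me c Q' i') - ind (ms c Q i) (me c Q' i'))))" .
  show ?thesis unfolding 1 3 sum.distrib[symmetric]
    by (intro sum.cong refl) (auto simp: Kf_def algebra_simps sum.distrib[symmetric] split: prod.splits intro!: sum.cong)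
qed

context qs begin

lemma K_zero:
  assumes Q: "Q \<in> F" and Q': "Q' \<in> F" and ne: "Q \<noteq> Q'"
  shows "Kf c Q i Q' i' = 0"
proof -
  have a: "sg i + sg i' = 0" if h: "ms c Q i = ms c Q' i'"
  proof -
    from h have "(crn c Q (i+3) = crn c Q' (i'+3) \<and> crn c Q i = crn c Q' i') \<or> (crn c Q (i+3) = crn c Q' i' \<and> crn c Q i = crn c Q' (i'+3))"
      unfolding ms_def doubleton_eq_iff by blast
    moreover have "\<not> (crn c Q (i+3) = crn c Q' (i'+3) \<and> crn c Q i = crn c Q' i')"
    proof
      assume "crn c Q (i+3) = crn c Q' (i'+3) \<and> crn c Q i = crn c Q' i'"
      then have "crn c Q (i+3) = crn c Q' (i'+3)" "crn c Q (Suc (i+3)) = crn c Q' (Suc (i'+3))"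
        unfolding crn_Suc3 by simp_all
      then show False using edge_uniq'[OF Q Q'] ne by blast
    qed
    ultimately have "crn c Q i = crn c Q' (i'+3)" by blast
    then have "even i \<longleftrightarrow> even (i'+3)" using col_crn[OF Q, of i] col_crn[OF Q', of "i'+3"] by simp
    then show ?thesis by (auto simp: sg_def)
  qed
  have b: "sg i + sg i' = 0" if h: "me c Q i = me c Q' i'"
  proof -
    from h have "(crn c Q i = crn c Q' i' \<and> crn c Q (Suc i) = crn c Q' (Suc i')) \<or> (crn c Q i = crn c Q' (Suc i') \<and> crn c Q (Suc i) = crn c Q' i')"
      unfolding me_def doubleton_eq_iff by blast
    moreover have "\<not> (crn c Q i = crn c Q' i' \<and> crn c Q (Suc i) = crn c Q' (Suc i'))"
      using edge_uniq'[OF Q Q'] ne by blast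
    ultimately have "crn c Q i = crn c Q' (Suc i')" by blast
    then have "even i \<longleftrightarrow> even (Suc i')" using col_crn[OF Q, of i] col_crn[OF Q', of "Suc i'"] by simp
    then show ?thesis by (auto simp: sg_def)
  qed
  have cc: "sg i = sg i'" if h: "me c Q' i' = ms c Q i"
  proof -
    from h have "(crn c Q' i' = crn c Q (i+3) \<and> crn c Q' (Suc i') = crn c Q i) \<or> (crn c Q' i' = crn c Q i \<and> crn c Q' (Suc i') = crn c Q (i+3))"
      unfolding me_def ms_def doubleton_eq_iff by blast
    moreover have "\<not> (crn c Q' i' = crn c Q (i+3) \<and> crn c Q' (Suc i') = crn c Q i)"
    proof
      assume "crn c Q' i' = crn c Q (i+3) \<and> crn c Q' (Suc i') = crn c Q i"
      then have "crn c Q' i' = crn c Q (i+3)" "crn c Q' (Suc i') = crn c Q (Suc (i+3))"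
        unfolding crn_Suc3 by simp_all
      then show False using edge_uniq'[OF Q' Q] ne by blast
    qed
    ultimately have "crn c Q' i' = crn c Q i" by blast
    then have "even i \<longleftrightarrow> even i'" using col_crn[OF Q, of i] col_crn[OF Q', of "i'"] by simp
    then show ?thesis by (auto simp: sg_def)
  qed
  have d: "sg i = sg i'" if h: "ms c Q' i' = me c Q i"
  proof -
    from h have "(crn c Q' (i'+3) = crn c Q i \<and> crn c Q' i' = crn c Q (Suc i)) \<or> (crn c Q' (i'+3) = crn c Q (Suc i) \<and> crn c Q' i' = crn c Q i)"
      unfolding me_def ms_def doubleton_eq_iff by blast
    moreover have "\<not> (crn c Q' (i'+3) = crn c Q i \<and> crn c Q' i' = crn c Q (Suc i))"
    proof
      assume "crn c Q' (i'+3) = crn c Q i \<and> crn c Q' i' = crn c Q (Suc i)"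
      then have "crn c Q' (i'+3) = crn c Q i" "crn c Q' (Suc (i'+3)) = crn c Q (Suc i)"
        unfolding crn_Suc3 by simp_all
      then show False using edge_uniq'[OF Q' Q] ne by blast
    qed
    ultimately have "crn c Q' i' = crn c Q i" by blast
    then have "even i \<longleftrightarrow> even i'" using col_crn[OF Q, of i] col_crn[OF Q', of "i'"] by simp
    then show ?thesis by (auto simp: sg_def)
  qed
  have "Kf c Q i Q' i' = (sg i - sg i') * ind (me c Q' i') (ms c Q i) - (sg i + sg i') * ind (ms c Q' i') (ms c Q i)
      + (sg i + sg i') * ind (me c Q' i') (me c Q i) - (sg i - sg i') * ind (ms c Q' i') (me c Q i)"
    unfolding Kf_def using ind_comm[of "me c Q i" "ms c Q' i'"] ind_comm[of "ms c Q i" "ms c Q' i'"]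
      ind_comm[of "me c Q i" "me c Q' i'"] ind_comm[of "ms c Q i" "me c Q' i'"]
    by (simp add: algebra_simps)
  also have "\<dots> = 0"
  proof -
    have t1: "(sg i - sg i') * ind (me c Q' i') (ms c Q i) = 0" using cc by (auto simp: ind_def)
    have t2: "(sg i + sg i') * ind (ms c Q' i') (ms c Q i) = 0" using a[OF sym] by (auto simp: ind_def)
    have t3: "(sg i + sg i') * ind (me c Q' i') (me c Q i) = 0" using b[OF sym] by (auto simp: ind_def)
    have t4: "(sg i - sg i') * ind (ms c Q' i') (me c Q i) = 0" using d by (auto simp: ind_def)
    show ?thesis unfolding t1 t2 t3 t4 by simp
  qed
  finally show ?thesis .
qed

lemma me_ms_face: assumes Q: "Q \<in> F"
  shows "ms c Q 0 = me c Q 3" "ms c Q 1 = me c Q 0" "ms c Q 2 = me c Q 1" "ms c Q 3 = me c Q 2"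
    "me c Q 0 \<noteq> me c Q 1" "me c Q 0 \<noteq> me c Q 2" "me c Q 0 \<noteq> me c Q 3"
    "me c Q 1 \<noteq> me c Q 2" "me c Q 1 \<noteq> me c Q 3" "me c Q 2 \<noteq> me c Q 3"
  using distinct[OF Q] unfolding me_def ms_def by (auto simp: doubleton_eq_iff insert_commute)

lemma same_face:
  assumes Q: "Q \<in> F"
  shows "(\<Sum>i<4. \<Sum>i'<4. b Q i * a Q i' * Kf c Q i Q i') = -2 * ((a Q 0 - a Q 2) * (b Q 1 - b Q 3) + (b Q 0 - b Q 2) * (a Q 1 - a Q 3))"
proof -
  note mm = me_ms_face[OF Q]
  have "me c Q 1 \<noteq> me c Q 0" "me c Q 2 \<noteq> me c Q 0" "me c Q 3 \<noteq> me c Q 0" "me c Q 2 \<noteq> me c Q 1" "me c Q 3 \<noteq> me c Q 1" "me c Q 3 \<noteq> me c Q 2"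
    using mm by metis+
  then show ?thesis unfolding sum4 Kf_def mm(1-4) using mm(5-10)
    by (simp add: ind_def sg_def algebra_simps)
qed

lemma antisym:
  assumes a: "X_cycle F c a" and b: "X_cycle F c b"
  shows "int_num F c black a b + int_num F c black b a = 0"
proof -
  let ?S = "F \<times> {..<4::nat}"
  have "Tf F c a b = 0" "Tf F c b a = 0" using a b by (simp_all add: Tf_def X_cycle_bd)
  then have "0 = (\<Sum>(Q, i)\<in>?S. \<Sum>(Q', i')\<in>?S. b Q i * a Q' i' * Kf c Q i Q' i')"
    using T_sum[of F c a b] by simp
  also have "\<dots> = (\<Sum>(Q, i)\<in>?S. \<Sum>i'<4. b Q i * a Q i' * Kf c Q i Q i')"
  proof (rule sum.cong[OF refl], clarify)
    fix Q i assume Q: "Q \<in> F"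
    have "(\<Sum>(Q', i')\<in>?S. b Q i * a Q' i' * Kf c Q i Q' i') = (\<Sum>Q'\<in>F. \<Sum>i'<4. b Q i * a Q' i' * Kf c Q i Q' i')"
      by (simp add: sum.cartesian_product)
    also have "\<dots> = (\<Sum>i'<4. b Q i * a Q i' * Kf c Q i Q i') + (\<Sum>Q'\<in>F - {Q}. \<Sum>i'<4. b Q i * a Q' i' * Kf c Q i Q' i')"
      using Q finF by (simp add: sum.remove)
    also have "(\<Sum>Q'\<in>F - {Q}. \<Sum>i'<4. b Q i * a Q' i' * Kf c Q i Q' i') = 0"
    proof (rule sum.neutral, rule ballI)
      fix Q' assume "Q' \<in> F - {Q}"
      then have "Kf c Q i' Q' i'' = 0" for i' i'' using K_zero[OF Q, of Q'] by auto
      then show "(\<Sum>i'<4. b Q i * a Q' i' * Kf c Q i Q' i') = 0" by simp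
    qed
    finally show "(\<Sum>(Q', i')\<in>?S. b Q i * a Q' i' * Kf c Q i Q' i') = (\<Sum>i'<4. b Q i * a Q i' * Kf c Q i Q i')" by simp
  qed
  also have "\<dots> = (\<Sum>Q\<in>F. \<Sum>i<4. \<Sum>i'<4. b Q i * a Q i' * Kf c Q i Q i')"
    by (rule sum_pairs)
  also have "\<dots> = (\<Sum>Q\<in>F. -2 * ((a Q 0 - a Q 2) * (b Q 1 - b Q 3) + (b Q 0 - b Q 2) * (a Q 1 - a Q 3)))"
    using same_face by (intro sum.cong) auto
  also have "\<dots> = -2 * (int_num F c black a b + int_num F c black b a)"
    by (simp only: int_num_eq sum.distrib[symmetric] sum_distrib_left)
  finally show ?thesis by simp
qed

end

definition dlt :: "'a \<Rightarrow> 'a \<Rightarrow> int" where "dlt m e = (if e = m then 1 else 0)"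

lemma bd_neg: "bd F c (\<lambda>Q i. - a Q i) e = - bd F c a e"
proof -
  have "\<And>Q i. (if me c Q i = e then - a Q i else 0) - (if ms c Q i = e then - a Q i else 0) = - ((if me c Q i = e then a Q i else 0) - (if ms c Q i = e then a Q i else 0))"
    by auto
  then show ?thesis unfolding bd_def by (simp only: sum_negf)
qed

lemma bd_zero: "bd F c (\<lambda>Q i. 0::int) e = 0"
  unfolding bd_def by simp

lemma PB_neg: "PB F (\<lambda>Q i. - a Q i) u = - PB F a u"
  unfolding PB_def by (simp add: sum_negf[symmetric] algebra_simps)

context qs begin

lemma rot_conn: "v \<in> V \<Longrightarrow> x \<in> flags_at F c v \<Longrightarrow> y \<in> flags_at F c v \<Longrightarrow> (x, y) \<in> (rot_rel F c v)\<^sup>*"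
  using qs unfolding quad_surface_def by blast

lemma flags_ne: "v \<in> V \<Longrightarrow> flags_at F c v \<noteq> {}"
  using qs unfolding quad_surface_def by blast

definition rel :: "'v set \<Rightarrow> 'v set \<Rightarrow> bool" where
  "rel m m' \<longleftrightarrow> (\<exists>\<gamma>. \<forall>e. bd F c \<gamma> e = dlt m' e - dlt m e)"

lemma rel_refl: "rel m m"
  unfolding rel_def by (rule exI[of _ "\<lambda>Q i. 0"]) (simp add: bd_zero)

lemma rel_sym: "rel m m' \<Longrightarrow> rel m' m"
  unfolding rel_def by (metis (no_types) bd_neg minus_diff_eq)

lemma rel_trans: "rel m m' \<Longrightarrow> rel m' m'' \<Longrightarrow> rel m m''"
  unfolding rel_def
proof (elim exE)
  fix g1 g2 assume "\<forall>e. bd F c g1 e = dlt m' e - dlt m e" "\<forall>e. bd F c g2 e = dlt m'' e - dlt m' e"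
  then show "\<exists>\<gamma>. \<forall>e. bd F c \<gamma> e = dlt m'' e - dlt m e"
    by (intro exI[of _ "\<lambda>Q i. g1 Q i + g2 Q i"]) (simp add: bd_add)
qed

definition rr :: "'v set \<Rightarrow> 'v set" where "rr m = (SOME x. rel x m)"

lemma rr_rel: "rel (rr m) m"
  unfolding rr_def by (rule someI[of _ m]) (rule rel_refl)

lemma rr_eq: assumes "rel m m'" shows "rr m = rr m'"
proof -
  have "(\<lambda>x. rel x m) = (\<lambda>x. rel x m')"
    using assms rel_trans rel_sym by blast
  then show ?thesis unfolding rr_def by simp
qed

definition gg :: "'v set \<Rightarrow> 'f \<Rightarrow> nat \<Rightarrow> int" where
  "gg m = (SOME \<gamma>. \<forall>e. bd F c \<gamma> e = dlt m e - dlt (rr m) e)"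

lemma gg_bd: "bd F c (gg m) e = dlt m e - dlt (rr m) e"
proof -
  have "\<exists>\<gamma>. \<forall>e. bd F c \<gamma> e = dlt m e - dlt (rr m) e" using rr_rel[of m] unfolding rel_def .
  then show ?thesis unfolding gg_def by (rule someI_ex[THEN spec])
qed

lemma Phi_diff:
  assumes per: "\<forall>ch. X_cycle F c ch \<longrightarrow> PB F ch u = 0"
    and g: "\<forall>e. bd F c \<gamma> e = dlt m' e - dlt m e"
  shows "PB F (gg m') u - PB F (gg m) u = PB F \<gamma> u"
proof -
  have r: "rr m = rr m'" using g by (intro rr_eq) (auto simp: rel_def)
  let ?c = "\<lambda>Q i. gg m Q i + \<gamma> Q i + - gg m' Q i"
  have "bd F c ?c e = 0" for e
    unfolding bd_add bd_neg gg_bd g[rule_format] r by simp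
  then have "PB F ?c u = 0" using per by (simp add: X_cycle_bd)
  then show ?thesis unfolding PB_add PB_neg by (simp add: algebra_simps)
qed

lemma PB_sglT: assumes "Q0 \<in> F"
  shows "PB F (\<lambda>Q i. if (Q0, i0, True) = (Q, i, True) then 1 else if (Q0, i0, True) = (Q, i, False) then -1 else 0) u
    = (if i0 = 1 then u Q0 else if i0 = 3 then - u Q0 else 0)"
proof -
  have "PB F (\<lambda>Q i. if (Q0, i0, True) = (Q, i, True) then 1 else if (Q0, i0, True) = (Q, i, False) then -1 else 0) u
     = (\<Sum>Q\<in>F. if Q = Q0 then (if i0 = 1 then u Q0 else if i0 = 3 then - u Q0 else 0) else 0)"
    unfolding PB_def by (intro sum.cong refl) auto
  also have "\<dots> = (if i0 = 1 then u Q0 else if i0 = 3 then - u Q0 else 0)"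
    using assms by (simp add: sum.delta[OF finF])
  finally show ?thesis .
qed

lemma Phi_edge:
  assumes per: "\<forall>ch. X_cycle F c ch \<longrightarrow> PB F ch u = 0" and Q: "Q \<in> F" and i: "i < 4"
  shows "PB F (gg (me c Q i)) u - PB F (gg (ms c Q i)) u = (if i = 1 then u Q else if i = 3 then - u Q else 0)"
proof -
  have "\<forall>e. bd F c (\<lambda>Q' i'. if (Q, i, True) = (Q', i', True) then 1 else if (Q, i, True) = (Q', i', False) then -1 else 0) e
     = dlt (me c Q i) e - dlt (ms c Q i) e"
    using bd_single[OF Q i, of True] by (auto simp: dlt_def me_def ms_def)
  from Phi_diff[OF per this] show ?thesis unfolding PB_sglT[OF Q] .
qed

lemma Phi_const:
  assumes per: "\<forall>ch. X_cycle F c ch \<longrightarrow> PB F ch u = 0" and b: "b \<in> V" "black b"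
    and x: "x \<in> flags_at F c b" and y: "y \<in> flags_at F c b"
  shows "PB F (gg (ms c (fst y) (snd y))) u = PB F (gg (ms c (fst x) (snd x))) u"
proof -
  have "(x, y) \<in> (rot_rel F c b)\<^sup>*" using rot_conn[OF b(1) x y] .
  then show ?thesis
  proof (induction rule: rtrancl_induct)
    case base
    then show ?case by simp
  next
    case (step y z)
    obtain Q1 i1 Q2 i2 where yz: "y = (Q1, i1)" "z = (Q2, i2)" by (cases y, cases z) auto
    have fl: "Q1 \<in> F" "i1 < 4" "crn c Q1 i1 = b" "Q2 \<in> F" "i2 < 4" "crn c Q2 i2 = b" "crn c Q2 (Suc i2) = crn c Q1 (i1 + 3)"
      using step(2) unfolding yz rot_rel_def flags_at_def by auto
    have "even i2" using col_crn[OF fl(4), of i2] fl(6) b(2) by simp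
    then have "i2 \<noteq> 1" "i2 \<noteq> 3" by auto
    then have "PB F (gg (me c Q2 i2)) u = PB F (gg (ms c Q2 i2)) u"
      using Phi_edge[OF per fl(4,5)] by simp
    moreover have "me c Q2 i2 = ms c Q1 i1" unfolding me_def ms_def using fl by auto
    ultimately show ?case using step(3) unfolding yz by simp
  qed
qed

definition psi :: "('f \<Rightarrow> complex) \<Rightarrow> 'v \<Rightarrow> complex" where
  "psi u b = PB F (gg (ms c (fst (SOME x. x \<in> flags_at F c b)) (snd (SOME x. x \<in> flags_at F c b)))) u"

lemma psi_flag:
  assumes per: "\<forall>ch. X_cycle F c ch \<longrightarrow> PB F ch u = 0" and Q: "Q \<in> F" and i: "i = 0 \<or> i = 2"
  shows "PB F (gg (ms c Q i)) u = psi u (c Q i)"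
proof -
  let ?b = "c Q i"
  have iv: "i < 4" using i by auto
  have b: "?b \<in> V" "black ?b" using cV[OF Q iv] col[OF Q] i by auto
  have fl: "(Q, i) \<in> flags_at F c ?b" unfolding flags_at_def using Q iv i by auto
  then have sx: "(SOME x. x \<in> flags_at F c ?b) \<in> flags_at F c ?b" by (rule someI)
  show ?thesis unfolding psi_def using Phi_const[OF per b sx fl] by simp
qed

lemma exact_pair:
  assumes per: "\<forall>ch. X_cycle F c ch \<longrightarrow> PB F ch u = 0" and ee: "cocW V F c ee"
  shows "(\<Sum>Q\<in>F. u Q * ee Q) = 0"
proof -
  have uQ: "u Q = psi u (c Q 2) - psi u (c Q 0)" if Q: "Q \<in> F" for Q
  proof -
    have "u Q = PB F (gg (me c Q 1)) u - PB F (gg (ms c Q 1)) u" using Phi_edge[OF per Q, of 1] by simp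
    moreover have "me c Q 1 = ms c Q 2" "ms c Q 1 = me c Q 0" using me_ms_face[OF Q] by simp_all
    moreover have "PB F (gg (me c Q 0)) u = PB F (gg (ms c Q 0)) u" using Phi_edge[OF per Q, of 0] by simp
    ultimately show ?thesis using psi_flag[OF per Q, of 0] psi_flag[OF per Q, of 2] by simp
  qed
  have "(\<Sum>Q\<in>F. u Q * ee Q) = (\<Sum>Q\<in>F. \<Sum>v\<in>V. psi u v * ((if c Q 2 = v then ee Q else 0) - (if c Q 0 = v then ee Q else 0)))"
  proof (rule sum.cong[OF refl])
    fix Q assume Q: "Q \<in> F"
    have "(\<Sum>v\<in>V. psi u v * ((if c Q 2 = v then ee Q else 0) - (if c Q 0 = v then ee Q else 0)))
      = (\<Sum>v\<in>V. (if c Q 2 = v then psi u v * ee Q else 0)) - (\<Sum>v\<in>V. (if c Q 0 = v then psi u v * ee Q else 0))"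
      unfolding sum_subtractf[symmetric] by (rule sum.cong) auto
    also have "\<dots> = psi u (c Q 2) * ee Q - psi u (c Q 0) * ee Q"
      using cV4[OF Q] by (simp add: sum.delta'[OF finV])
    finally have calc: "(\<Sum>v\<in>V. psi u v * ((if c Q 2 = v then ee Q else 0) - (if c Q 0 = v then ee Q else 0))) = psi u (c Q 2) * ee Q - psi u (c Q 0) * ee Q" .
    have A: "u Q * ee Q = psi u (c Q 2) * ee Q - psi u (c Q 0) * ee Q" unfolding uQ[OF Q] by (simp add: algebra_simps)
    show "u Q * ee Q = (\<Sum>v\<in>V. psi u v * ((if c Q 2 = v then ee Q else 0) - (if c Q 0 = v then ee Q else 0)))"
      unfolding A calc ..
  qed
  also have "\<dots> = (\<Sum>v\<in>V. psi u v * (\<Sum>Q\<in>F. (if c Q 2 = v then ee Q else 0) - (if c Q 0 = v then ee Q else 0)))"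
    by (subst sum.swap) (simp add: sum_distrib_left)
  also have "\<dots> = 0" using ee by (simp add: cocW_def)
  finally show ?thesis .
qed

end

lemma PB_uadd: "PB F ch (\<lambda>Q. u1 Q + u2 Q) = PB F ch u1 + PB F ch u2"
  unfolding PB_def sum.distrib[symmetric] by (rule sum.cong) (simp_all add: algebra_simps)
lemma PB_udiff: "PB F ch (\<lambda>Q. u1 Q - u2 Q) = PB F ch u1 - PB F ch u2"
  unfolding PB_def sum_subtractf[symmetric] by (rule sum.cong) (simp_all add: algebra_simps)
lemma PB_usum: "PB F ch (\<lambda>Q. \<Sum>k\<in>K. f k Q) = (\<Sum>k\<in>K. PB F ch (f k))"
  unfolding PB_def by (simp add: sum_distrib_left sum.swap[of _ F])
lemma PB_uscale: "PB F ch (\<lambda>Q. a * f Q) = a * PB F ch f"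
  unfolding PB_def by (simp add: sum_distrib_left algebra_simps)
lemma PW_udiff: "PW F ch (\<lambda>Q. u1 Q - u2 Q) = PW F ch u1 - PW F ch u2"
  unfolding PW_def sum_subtractf[symmetric] by (rule sum.cong) (simp_all add: algebra_simps)

lemma cocB_add: "cocB V F c u1 \<Longrightarrow> cocB V F c u2 \<Longrightarrow> cocB V F c (\<lambda>Q. u1 Q + u2 Q)"
  unfolding cocB_def
proof (rule ballI)
  fix v assume h: "\<forall>v\<in>V. (\<Sum>Q\<in>F. (if c Q 1 = v then u1 Q else 0) - (if c Q 3 = v then u1 Q else 0)) = 0"
    "\<forall>v\<in>V. (\<Sum>Q\<in>F. (if c Q 1 = v then u2 Q else 0) - (if c Q 3 = v then u2 Q else 0)) = 0" and v: "v \<in> V"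
  have "(\<Sum>Q\<in>F. (if c Q 1 = v then u1 Q + u2 Q else 0) - (if c Q 3 = v then u1 Q + u2 Q else 0))
    = (\<Sum>Q\<in>F. (if c Q 1 = v then u1 Q else 0) - (if c Q 3 = v then u1 Q else 0)) + (\<Sum>Q\<in>F. (if c Q 1 = v then u2 Q else 0) - (if c Q 3 = v then u2 Q else 0))"
    unfolding sum.distrib[symmetric] by (rule sum.cong) auto
  then show "(\<Sum>Q\<in>F. (if c Q 1 = v then u1 Q + u2 Q else 0) - (if c Q 3 = v then u1 Q + u2 Q else 0)) = 0"
    using h v by simp
qed

lemma cocB_scale: "cocB V F c u \<Longrightarrow> cocB V F c (\<lambda>Q. a * u Q)"
  unfolding cocB_def
proof (rule ballI)
  fix v assume h: "\<forall>v\<in>V. (\<Sum>Q\<in>F. (if c Q 1 = v then u Q else 0) - (if c Q 3 = v then u Q else 0)) = 0" and v: "v \<in> V"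
  have "(\<Sum>Q\<in>F. (if c Q 1 = v then a * u Q else 0) - (if c Q 3 = v then a * u Q else 0))
    = a * (\<Sum>Q\<in>F. (if c Q 1 = v then u Q else 0) - (if c Q 3 = v then u Q else 0))"
    unfolding sum_distrib_left by (rule sum.cong) auto
  then show "(\<Sum>Q\<in>F. (if c Q 1 = v then a * u Q else 0) - (if c Q 3 = v then a * u Q else 0)) = 0"
    using h v by simp
qed

lemma cocB_sum: assumes "finite K" "\<forall>k\<in>K. cocB V F c (f k)" shows "cocB V F c (\<lambda>Q. \<Sum>k\<in>K. f k Q)"
  using assms
proof (induction K rule: finite_induct)
  case empty
  then show ?case by (simp add: cocB_def)
next
  case (insert x K)
  then show ?case using cocB_add[of V F c "f x" "\<lambda>Q. \<Sum>k\<in>K. f k Q"] by simp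
qed

lemma cocB_neg: "cocB V F c u \<Longrightarrow> cocB V F c (\<lambda>Q. - u Q)"
  using cocB_scale[of V F c u "-1"] by simp

lemma cocW_cnj: "cocW V F c u \<Longrightarrow> cocW V F c (\<lambda>Q. cnj (u Q))"
  unfolding cocW_def
proof (rule ballI)
  fix v assume h: "\<forall>v\<in>V. (\<Sum>Q\<in>F. (if c Q 2 = v then u Q else 0) - (if c Q 0 = v then u Q else 0)) = 0" and v: "v \<in> V"
  have "(\<Sum>Q\<in>F. (if c Q 2 = v then cnj (u Q) else 0) - (if c Q 0 = v then cnj (u Q) else 0))
    = cnj (\<Sum>Q\<in>F. (if c Q 2 = v then u Q else 0) - (if c Q 0 = v then u Q else 0))"
    unfolding cnj_sum by (rule sum.cong) auto
  then show "(\<Sum>Q\<in>F. (if c Q 2 = v then cnj (u Q) else 0) - (if c Q 0 = v then cnj (u Q) else 0)) = 0"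
    using h v by simp
qed

lemma PW_cnj: "PW F ch (\<lambda>Q. cnj (u Q)) = cnj (PW F ch u)"
  unfolding PW_def cnj_sum by simp

lemma sum_piW: "(\<Sum>Q\<in>F. piW ch Q * ee Q) = PW F ch ee"
  unfolding PW_def piW_def ..

locale qsb = qs V F c black for V :: "'v set" and F :: "'f set" and c :: "'f \<Rightarrow> nat \<Rightarrow> 'v" and black :: "'v \<Rightarrow> bool" +
  fixes g :: nat and \<alpha> \<beta> :: "nat \<Rightarrow> 'f xedge list"
  assumes basis: "symplectic_X_basis F c black g \<alpha> \<beta>"
begin

lemma cycA: "k < g \<Longrightarrow> X_cycle F c (path_chain (\<alpha> k))"
  using basis closed_path_cycle unfolding symplectic_X_basis_def by blast
lemma cycB: "k < g \<Longrightarrow> X_cycle F c (path_chain (\<beta> k))"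
  using basis closed_path_cycle unfolding symplectic_X_basis_def by blast
lemma pathA: "k < g \<Longrightarrow> \<forall>(Q, i, s)\<in>set (\<alpha> k). Q \<in> F \<and> i < 4"
  using basis unfolding symplectic_X_basis_def closed_X_path_def by blast
lemma pathB: "k < g \<Longrightarrow> \<forall>(Q, i, s)\<in>set (\<beta> k). Q \<in> F \<and> i < 4"
  using basis unfolding symplectic_X_basis_def closed_X_path_def by blast

lemma intAA: "j < g \<Longrightarrow> k < g \<Longrightarrow> int_num F c black (path_chain (\<alpha> j)) (path_chain (\<alpha> k)) = 0"
  using basis unfolding symplectic_X_basis_def by blast
lemma intBB: "j < g \<Longrightarrow> k < g \<Longrightarrow> int_num F c black (path_chain (\<beta> j)) (path_chain (\<beta> k)) = 0"
  using basis unfolding symplectic_X_basis_def by blast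
lemma intAB: "j < g \<Longrightarrow> k < g \<Longrightarrow> int_num F c black (path_chain (\<alpha> j)) (path_chain (\<beta> k)) = (if j = k then 1 else 0)"
  using basis unfolding symplectic_X_basis_def by blast
lemma intBA: "j < g \<Longrightarrow> k < g \<Longrightarrow> int_num F c black (path_chain (\<beta> j)) (path_chain (\<alpha> k)) = (if j = k then -1 else 0)"
  using antisym[OF cycB cycA, of j k] intAB[of k j] by auto

lemma PB_lincomb: "PB F (lincomb g \<alpha> \<beta> p q) u = (\<Sum>k<g. of_int (p k) * PB F (path_chain (\<alpha> k)) u + of_int (q k) * PB F (path_chain (\<beta> k)) u)"
proof -
  have "PB F (lincomb g \<alpha> \<beta> p q) u = (\<Sum>Q\<in>F. \<Sum>k<g. (of_int (p k) * of_int (path_chain (\<alpha> k) Q 1 - path_chain (\<alpha> k) Q 3) * u Q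
      + of_int (q k) * of_int (path_chain (\<beta> k) Q 1 - path_chain (\<beta> k) Q 3) * u Q))"
    unfolding PB_def lincomb_def
    by (intro sum.cong refl) (simp add: of_int_sum sum_subtractf[symmetric] sum.distrib[symmetric] sum_distrib_left algebra_simps)
  also have "\<dots> = (\<Sum>k<g. \<Sum>Q\<in>F. of_int (p k) * (of_int (path_chain (\<alpha> k) Q 1 - path_chain (\<alpha> k) Q 3) * u Q)
      + of_int (q k) * (of_int (path_chain (\<beta> k) Q 1 - path_chain (\<beta> k) Q 3) * u Q))"
    by (subst sum.swap) (intro sum.cong refl, simp add: algebra_simps)
  also have "\<dots> = (\<Sum>k<g. of_int (p k) * PB F (path_chain (\<alpha> k)) u + of_int (q k) * PB F (path_chain (\<beta> k)) u)"
    unfolding PB_def sum_distrib_left sum.distrib ..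
  finally show ?thesis .
qed

lemma per_zero:
  assumes u: "cocB V F c u" and z: "\<forall>j<g. PB F (path_chain (\<alpha> j)) u = 0 \<and> PB F (path_chain (\<beta> j)) u = 0"
  shows "\<forall>ch. X_cycle F c ch \<longrightarrow> PB F ch u = 0"
proof (intro allI impI)
  fix ch assume "X_cycle F c ch"
  then obtain p q where "homologous F c ch (lincomb g \<alpha> \<beta> p q)"
    using basis unfolding symplectic_X_basis_def by blast
  then have "PB F ch u = PB F (lincomb g \<alpha> \<beta> p q) u" by (rule homol_PB[OF u])
  also have "\<dots> = 0" unfolding PB_lincomb using z by simp
  finally show "PB F ch u = 0" .
qed

lemma RB:
  assumes d: "cocB V F c d" and ee: "cocW V F c ee"
  shows "(\<Sum>Q\<in>F. d Q * ee Q) = (\<Sum>k<g. PB F (path_chain (\<alpha> k)) d * PW F (path_chain (\<beta> k)) ee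
            - PB F (path_chain (\<beta> k)) d * PW F (path_chain (\<alpha> k)) ee)"
proof -
  let ?A = "\<lambda>k. PB F (path_chain (\<alpha> k)) d" and ?B = "\<lambda>k. PB F (path_chain (\<beta> k)) d"
  define u where "u = (\<lambda>Q. d Q - (\<Sum>k<g. ?A k * piW (path_chain (\<beta> k)) Q) + (\<Sum>k<g. ?B k * piW (path_chain (\<alpha> k)) Q))"
  have cu: "cocB V F c u" unfolding u_def
    apply (rule cocB_add)
     apply (unfold diff_conv_add_uminus)
     apply (rule cocB_add[OF d])
     apply (rule cocB_neg)
     apply (rule cocB_sum, simp, intro ballI cocB_scale piW_cocB cycB, simp)
    apply (rule cocB_sum, simp, intro ballI cocB_scale piW_cocB cycA, simp)
    done
  have pu: "PB F ch u = PB F ch d - (\<Sum>k<g. ?A k * PB F ch (piW (path_chain (\<beta> k)))) + (\<Sum>k<g. ?B k * PB F ch (piW (path_chain (\<alpha> k))))" for ch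
    unfolding u_def diff_conv_add_uminus PB_uadd PB_usum PB_uscale
    using PB_uscale[of F ch "-1"] PB_usum by (simp add: PB_usum PB_uscale sum_negf[symmetric])
  have z: "\<forall>j<g. PB F (path_chain (\<alpha> j)) u = 0 \<and> PB F (path_chain (\<beta> j)) u = 0"
  proof (intro allI impI conjI)
    fix j assume j: "j < g"
    have "PB F (path_chain (\<alpha> j)) u = ?A j - (\<Sum>k<g. if k = j then ?A k else 0) + (\<Sum>k<g. 0)"
      unfolding pu PB_piW using intBA[OF _ j] intAA[OF _ j] by (intro arg_cong2[where f = "(+)"] arg_cong2[where f = "(-)"] refl sum.cong) auto
    then show "PB F (path_chain (\<alpha> j)) u = 0" using j by (simp add: sum.delta)
    have "PB F (path_chain (\<beta> j)) u = ?B j - (\<Sum>k<g. 0) + (\<Sum>k<g. if k = j then - ?B k else 0)"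
      unfolding pu PB_piW using intBB[OF _ j] intAB[OF _ j] by (intro arg_cong2[where f = "(+)"] arg_cong2[where f = "(-)"] refl sum.cong) auto
    then show "PB F (path_chain (\<beta> j)) u = 0" using j by (simp add: sum.delta)
  qed
  have "(\<Sum>Q\<in>F. u Q * ee Q) = 0" by (rule exact_pair[OF per_zero[OF cu z] ee])
  moreover have "(\<Sum>Q\<in>F. u Q * ee Q) = (\<Sum>Q\<in>F. d Q * ee Q) - (\<Sum>k<g. ?A k * PW F (path_chain (\<beta> k)) ee) + (\<Sum>k<g. ?B k * PW F (path_chain (\<alpha> k)) ee)"
    unfolding u_def sum_piW[symmetric]
    by (simp add: algebra_simps sum.distrib sum_subtractf sum_distrib_left sum_distrib_right sum.swap[of _ F])
  ultimately show ?thesis by (simp add: sum_subtractf algebra_simps)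
qed

end

lemma cocW_add: "cocW V F c u1 \<Longrightarrow> cocW V F c u2 \<Longrightarrow> cocW V F c (\<lambda>Q. u1 Q + u2 Q)"
  unfolding cocW_def
proof (rule ballI)
  fix v assume h: "\<forall>v\<in>V. (\<Sum>Q\<in>F. (if c Q 2 = v then u1 Q else 0) - (if c Q 0 = v then u1 Q else 0)) = 0"
    "\<forall>v\<in>V. (\<Sum>Q\<in>F. (if c Q 2 = v then u2 Q else 0) - (if c Q 0 = v then u2 Q else 0)) = 0" and v: "v \<in> V"
  have "(\<Sum>Q\<in>F. (if c Q 2 = v then u1 Q + u2 Q else 0) - (if c Q 0 = v then u1 Q + u2 Q else 0))
    = (\<Sum>Q\<in>F. (if c Q 2 = v then u1 Q else 0) - (if c Q 0 = v then u1 Q else 0)) + (\<Sum>Q\<in>F. (if c Q 2 = v then u2 Q else 0) - (if c Q 0 = v then u2 Q else 0))"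
    unfolding sum.distrib[symmetric] by (rule sum.cong) auto
  then show "(\<Sum>Q\<in>F. (if c Q 2 = v then u1 Q + u2 Q else 0) - (if c Q 0 = v then u1 Q + u2 Q else 0)) = 0"
    using h v by simp
qed

lemma cocW_scale: "cocW V F c u \<Longrightarrow> cocW V F c (\<lambda>Q. a * u Q)"
  unfolding cocW_def
proof (rule ballI)
  fix v assume h: "\<forall>v\<in>V. (\<Sum>Q\<in>F. (if c Q 2 = v then u Q else 0) - (if c Q 0 = v then u Q else 0)) = 0" and v: "v \<in> V"
  have "(\<Sum>Q\<in>F. (if c Q 2 = v then a * u Q else 0) - (if c Q 0 = v then a * u Q else 0))
    = a * (\<Sum>Q\<in>F. (if c Q 2 = v then u Q else 0) - (if c Q 0 = v then u Q else 0))"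
    unfolding sum_distrib_left by (rule sum.cong) auto
  then show "(\<Sum>Q\<in>F. (if c Q 2 = v then a * u Q else 0) - (if c Q 0 = v then a * u Q else 0)) = 0"
    using h v by simp
qed

lemma cocB_cnj: "cocB V F c u \<Longrightarrow> cocB V F c (\<lambda>Q. cnj (u Q))"
  unfolding cocB_def
proof (rule ballI)
  fix v assume h: "\<forall>v\<in>V. (\<Sum>Q\<in>F. (if c Q 1 = v then u Q else 0) - (if c Q 3 = v then u Q else 0)) = 0" and v: "v \<in> V"
  have "(\<Sum>Q\<in>F. (if c Q 1 = v then cnj (u Q) else 0) - (if c Q 3 = v then cnj (u Q) else 0))
    = cnj (\<Sum>Q\<in>F. (if c Q 1 = v then u Q else 0) - (if c Q 3 = v then u Q else 0))"
    unfolding cnj_sum by (rule sum.cong) auto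
  then show "(\<Sum>Q\<in>F. (if c Q 1 = v then cnj (u Q) else 0) - (if c Q 3 = v then cnj (u Q) else 0)) = 0"
    using h v by (metis complex_cnj_zero)
qed

lemma PB_cnj: "PB F ch (\<lambda>Q. cnj (u Q)) = cnj (PB F ch u)"
  unfolding PB_def cnj_sum by simp

lemma PW_uscale: "PW F ch (\<lambda>Q. a * f Q) = a * PW F ch f"
  unfolding PW_def by (simp add: sum_distrib_left algebra_simps)

lemma PB_zero: "\<forall>Q\<in>F. u Q = 0 \<Longrightarrow> PB F ch u = 0"
  unfolding PB_def by simp
lemma PW_zero: "\<forall>Q\<in>F. u Q = 0 \<Longrightarrow> PW F ch u = 0"
  unfolding PW_def by simp

context qs begin

lemma cf_cocB: assumes cf: "closed_form V F c \<omega>" and td: "type_diamond F \<omega>" shows "cocB V F c (dB \<omega>)"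
  unfolding cocB_def
proof
  fix v assume v: "v \<in> V"
  show "(\<Sum>Q\<in>F. (if c Q 1 = v then dB \<omega> Q else 0) - (if c Q 3 = v then dB \<omega> Q else 0)) = 0"
  proof (cases "black v")
    case True
    then show ?thesis using col by (intro sum.neutral) auto
  next
    case False
    have pw: "(if c Q 1 = v then dB \<omega> Q else 0) - (if c Q 3 = v then dB \<omega> Q else 0) = 2 * (\<Sum>i<4. if crn c Q i = v then \<omega> Q i else 0)" if Q: "Q \<in> F" for Q
    proof -
      have "c Q 0 \<noteq> v" "c Q 2 \<noteq> v" using col[OF Q] False by auto
      then show ?thesis using td Q unfolding sum4 dB_def type_diamond_def by auto
    qed
    have "(\<Sum>Q\<in>F. (if c Q 1 = v then dB \<omega> Q else 0) - (if c Q 3 = v then dB \<omega> Q else 0))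
      = (\<Sum>Q\<in>F. 2 * (\<Sum>i<4. if crn c Q i = v then \<omega> Q i else 0))"
      by (rule sum.cong[OF refl]) (rule pw)
    also have "\<dots> = 2 * (\<Sum>Q\<in>F. \<Sum>i<4. if crn c Q i = v then \<omega> Q i else 0)"
      by (simp add: sum_distrib_left)
    also have "\<dots> = 0" using cf v by (simp add: closed_form_def)
    finally show ?thesis .
  qed
qed

lemma cf_cocW: assumes cf: "closed_form V F c \<omega>" and td: "type_diamond F \<omega>" shows "cocW V F c (dW \<omega>)"
  unfolding cocW_def
proof
  fix v assume v: "v \<in> V"
  show "(\<Sum>Q\<in>F. (if c Q 2 = v then dW \<omega> Q else 0) - (if c Q 0 = v then dW \<omega> Q else 0)) = 0"
  proof (cases "black v")
    case False
    then show ?thesis using col by (intro sum.neutral) auto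
  next
    case True
    have pw: "(if c Q 2 = v then dW \<omega> Q else 0) - (if c Q 0 = v then dW \<omega> Q else 0) = 2 * (\<Sum>i<4. if crn c Q i = v then \<omega> Q i else 0)" if Q: "Q \<in> F" for Q
    proof -
      have "c Q 1 \<noteq> v" "c Q 3 \<noteq> v" using col[OF Q] True by auto
      then show ?thesis using td Q unfolding sum4 dW_def type_diamond_def by auto
    qed
    have "(\<Sum>Q\<in>F. (if c Q 2 = v then dW \<omega> Q else 0) - (if c Q 0 = v then dW \<omega> Q else 0))
      = (\<Sum>Q\<in>F. 2 * (\<Sum>i<4. if crn c Q i = v then \<omega> Q i else 0))"
      by (rule sum.cong[OF refl]) (rule pw)
    also have "\<dots> = 2 * (\<Sum>Q\<in>F. \<Sum>i<4. if crn c Q i = v then \<omega> Q i else 0)"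
      by (simp add: sum_distrib_left)
    also have "\<dots> = 0" using cf v by (simp add: closed_form_def)
    finally show ?thesis .
  qed
qed

lemma holo_rel: assumes "disc_holo_diff V F c rho \<omega>" "Q \<in> F" shows "dW \<omega> Q = \<i> * rho Q * dB \<omega> Q"
proof -
  obtain f where f: "disc_holo_on c rho Q f" "\<forall>i<4. \<omega> Q i = (f (crn c Q (Suc i)) - f (crn c Q (i + 3))) / 2"
    using assms unfolding disc_holo_diff_def by blast
  have a: "\<omega> Q 1 = (f (c Q 2) - f (c Q 0)) / 2" using f(2)[rule_format, of 1] by simp
  have b: "\<omega> Q 2 = (f (c Q 3) - f (c Q 1)) / 2" using f(2)[rule_format, of 2] by simp
  have "dW \<omega> Q = f (c Q 3) - f (c Q 1)" unfolding dW_def b by simp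
  also have "\<dots> = \<i> * rho Q * (f (c Q 2) - f (c Q 0))" using f(1) unfolding disc_holo_on_def .
  also have "\<dots> = \<i> * rho Q * dB \<omega> Q" unfolding dB_def a by simp
  finally show ?thesis .
qed

end

context qsb begin

lemma uniq0:
  assumes d: "cocB V F c d" and e: "cocW V F c e" and holo: "\<forall>Q\<in>F. e Q = \<i> * rho Q * d Q"
    and pos: "\<forall>Q\<in>F. Re (rho Q) > 0"
    and za: "\<forall>j<g. PB F (path_chain (\<alpha> j)) d = 0 \<and> PW F (path_chain (\<alpha> j)) e = 0"
  shows "\<forall>Q\<in>F. d Q = 0"
proof -
  have "(\<Sum>Q\<in>F. d Q * cnj (e Q)) = (\<Sum>k<g. PB F (path_chain (\<alpha> k)) d * PW F (path_chain (\<beta> k)) (\<lambda>Q. cnj (e Q))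
            - PB F (path_chain (\<beta> k)) d * PW F (path_chain (\<alpha> k)) (\<lambda>Q. cnj (e Q)))"
    by (rule RB[OF d cocW_cnj[OF e]])
  also have "\<dots> = 0" using za by (simp add: PW_cnj)
  finally have s0: "(\<Sum>Q\<in>F. d Q * cnj (e Q)) = 0" .
  have "(\<Sum>Q\<in>F. d Q * cnj (e Q)) = - \<i> * (\<Sum>Q\<in>F. cnj (rho Q) * (d Q * cnj (d Q)))"
    unfolding sum_distrib_left
    by (rule sum.cong[OF refl]) (simp add: holo algebra_simps)
  with s0 have "(\<Sum>Q\<in>F. cnj (rho Q) * (d Q * cnj (d Q))) = 0" by simp
  then have "(\<Sum>Q\<in>F. cnj (rho Q) * of_real ((cmod (d Q))\<^sup>2)) = 0" unfolding complex_norm_square .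
  then have "Re (\<Sum>Q\<in>F. cnj (rho Q) * of_real ((cmod (d Q))\<^sup>2)) = 0" by simp
  then have s1: "(\<Sum>Q\<in>F. Re (rho Q) * (cmod (d Q))\<^sup>2) = 0" by (simp add: Re_sum)
  have "\<forall>Q\<in>F. Re (rho Q) * (cmod (d Q))\<^sup>2 = 0"
    using sum_nonneg_eq_0_iff[OF finF, of "\<lambda>Q. Re (rho Q) * (cmod (d Q))\<^sup>2"] s1 pos
    by (simp add: less_imp_le)
  then show ?thesis using pos by (metis less_irrefl mult_eq_0_iff norm_eq_zero power_eq_0_iff)
qed

lemma uniq:
  assumes d1: "cocB V F c d1" and e1: "cocW V F c e1" and h1: "\<forall>Q\<in>F. e1 Q = \<i> * rho Q * d1 Q"
    and d2: "cocB V F c d2" and e2: "cocW V F c e2" and h2: "\<forall>Q\<in>F. e2 Q = \<i> * rho Q * d2 Q"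
    and pos: "\<forall>Q\<in>F. Re (rho Q) > 0"
    and za: "\<forall>j<g. PB F (path_chain (\<alpha> j)) d1 = PB F (path_chain (\<alpha> j)) d2 \<and> PW F (path_chain (\<alpha> j)) e1 = PW F (path_chain (\<alpha> j)) e2"
    and j: "j < g"
  shows "PB F (path_chain (\<beta> j)) d1 = PB F (path_chain (\<beta> j)) d2 \<and> PW F (path_chain (\<beta> j)) e1 = PW F (path_chain (\<beta> j)) e2"
proof -
  have cd: "cocB V F c (\<lambda>Q. d1 Q - d2 Q)" unfolding diff_conv_add_uminus by (rule cocB_add[OF d1 cocB_neg[OF d2]])
  have ce: "cocW V F c (\<lambda>Q. e1 Q - e2 Q)" unfolding diff_conv_add_uminus
    using cocW_add[OF e1 cocW_scale[OF e2, of "-1"]] by simp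
  have hd: "\<forall>Q\<in>F. e1 Q - e2 Q = \<i> * rho Q * (d1 Q - d2 Q)" using h1 h2 by (simp add: algebra_simps)
  have z: "\<forall>Q\<in>F. d1 Q - d2 Q = 0"
    by (rule uniq0[OF cd ce hd pos]) (use za in \<open>simp add: PB_udiff PW_udiff\<close>)
  then have z2: "\<forall>Q\<in>F. e1 Q - e2 Q = 0" using hd by simp
  show ?thesis using PB_zero[OF z, of "path_chain (\<beta> j)"] PW_zero[OF z2, of "path_chain (\<beta> j)"]
    by (simp add: PB_udiff PW_udiff)
qed

end

definition pim :: "nat \<Rightarrow> nat \<Rightarrow> nat" where "pim k i = (k + 4 - i) mod 4"

lemma pim_lt: "pim k i < 4" by (simp add: pim_def)

lemma pim_vals: "pim 0 0 = 0" "pim 0 1 = 3" "pim 0 2 = 2" "pim 0 3 = 1"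
  "pim 1 0 = 1" "pim 1 1 = 0" "pim 1 2 = 3" "pim 1 3 = 2"
  "pim 2 0 = 2" "pim 2 1 = 1" "pim 2 2 = 0" "pim 2 3 = 3"
  "pim 3 0 = 3" "pim 3 1 = 2" "pim 3 2 = 1" "pim 3 3 = 0"
  by (simp_all add: pim_def)

lemma k4: "(k::nat) < 4 \<Longrightarrow> k = 0 \<or> k = 1 \<or> k = 2 \<or> k = 3" by auto

lemma pim_inv: assumes "k < 4" "i < 4" "j < 4" shows "pim k i = j \<longleftrightarrow> i = pim k j"
  using k4[OF assms(1)] k4[OF assms(2)] k4[OF assms(3)] by (elim disjE; simp add: pim_def)

lemma sum_pim: assumes "k < 4" shows "(\<Sum>i<4. h (pim k i)) = (\<Sum>j<4. (h j :: 'a::comm_monoid_add))"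
  using k4[OF assms] unfolding sum4 by (elim disjE; hypsubst; simp only: pim_vals; simp add: ac_simps)

lemma pim_image: assumes "k < 4" shows "pim k ` {..<4} = {..<4}"
proof
  show "pim k ` {..<4} \<subseteq> {..<4}" using pim_lt by auto
  show "{..<4} \<subseteq> pim k ` {..<4}"
  proof
    fix j assume j: "j \<in> {..<4::nat}"
    have "pim k (pim k j) = j" using pim_inv[of k "pim k j" j] assms pim_lt j by simp
    then show "j \<in> pim k ` {..<4}" using pim_lt by (metis image_eqI lessThan_iff)
  qed
qed

locale qst = qsb V F c black g \<alpha> \<beta> for V :: "'v set" and F :: "'f set" and c :: "'f \<Rightarrow> nat \<Rightarrow> 'v" and black :: "'v \<Rightarrow> bool"
  and g :: nat and \<alpha> \<beta> :: "nat \<Rightarrow> 'f xedge list" +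
  fixes tau :: "'v \<Rightarrow> 'v" and rho :: "'f \<Rightarrow> complex"
  assumes inv: "antihol_involution V F c black rho tau"
begin

lemma tauV: "v \<in> V \<Longrightarrow> tau v \<in> V" and tau_tau: "v \<in> V \<Longrightarrow> tau (tau v) = v"
  using inv unfolding antihol_involution_def by auto

lemma tau_inj: "u \<in> V \<Longrightarrow> v \<in> V \<Longrightarrow> tau u = tau v \<Longrightarrow> u = v"
  using tau_tau by metis

definition sk :: "'f \<Rightarrow> 'f \<times> nat" where
  "sk Q = (SOME p. fst p \<in> F \<and> snd p < 4 \<and> (\<forall>i<4. tau (crn c Q i) = crn c (fst p) (snd p + 4 - i)))"
definition sig :: "'f \<Rightarrow> 'f" where "sig Q = fst (sk Q)"
definition kap :: "'f \<Rightarrow> nat" where "kap Q = snd (sk Q)"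

lemma sigk: assumes "Q \<in> F" shows "sig Q \<in> F" "kap Q < 4" "\<forall>i<4. tau (crn c Q i) = crn c (sig Q) (kap Q + 4 - i)"
proof -
  obtain Q' k where "Q' \<in> F" "k < 4" "\<forall>i<4. tau (crn c Q i) = crn c Q' (k + 4 - i)"
    using inv assms unfolding antihol_involution_def by blast
  then have "\<exists>p. fst p \<in> F \<and> snd p < 4 \<and> (\<forall>i<4. tau (crn c Q i) = crn c (fst p) (snd p + 4 - i))"
    by (intro exI[of _ "(Q', k)"]) simp
  from someI_ex[OF this] show "sig Q \<in> F" "kap Q < 4" "\<forall>i<4. tau (crn c Q i) = crn c (sig Q) (kap Q + 4 - i)"
    unfolding sig_def kap_def sk_def by blast+
qed

lemma tau_c: assumes "Q \<in> F" "i < 4" shows "tau (c Q i) = c (sig Q) (pim (kap Q) i)"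
  using sigk(3)[OF assms(1), rule_format, OF assms(2)] assms(2) by (simp add: crn_def pim_def)

lemma corners_c: "corners c Q = c Q ` {..<4}"
  unfolding corners_def crn_def by (intro image_cong refl) simp

lemma corners_eq: assumes "Q \<in> F" shows "tau ` corners c Q = corners c (sig Q)"
proof -
  have "tau ` corners c Q = (\<lambda>i. c (sig Q) (pim (kap Q) i)) ` {..<4}"
    unfolding corners_c image_image using tau_c[OF assms] by (intro image_cong refl) simp
  also have "\<dots> = c (sig Q) ` (pim (kap Q) ` {..<4})" by (simp add: image_image)
  also have "\<dots> = corners c (sig Q)" unfolding corners_c pim_image[OF sigk(2)[OF assms]] ..
  finally show ?thesis .
qed

lemma card_corners: assumes "Q \<in> F" shows "card (corners c Q) = 4"
  unfolding corners_c using card_image[OF injc[OF assms]] by simp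

lemma same_corners: assumes "Q1 \<in> F" "Q2 \<in> F" "corners c Q1 = corners c Q2" shows "Q1 = Q2"
proof (rule ccontr)
  assume ne: "Q1 \<noteq> Q2"
  have "corners c Q1 \<inter> corners c Q2 = {} \<or> (\<exists>v. corners c Q1 \<inter> corners c Q2 = {v}) \<or>
        (\<exists>i<4. corners c Q1 \<inter> corners c Q2 = {crn c Q1 i, crn c Q1 (Suc i)})"
    using qs assms(1,2) ne unfolding quad_surface_def by blast
  moreover have "card {x, y} \<le> 2" for x y :: 'v by (cases "x = y") auto
  ultimately have "card (corners c Q1 \<inter> corners c Q2) \<le> 2"
    by (elim disjE exE conjE) auto
  then show False using card_corners[OF assms(1)] assms(3) by simp
qed

lemma cornersV: "Q \<in> F \<Longrightarrow> corners c Q \<subseteq> V"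
  unfolding corners_c using cV by auto

lemma tau_img_inj: assumes "A \<subseteq> V" "B \<subseteq> V" "tau ` A = tau ` B" shows "A = B"
proof -
  have "tau ` tau ` A = A" "tau ` tau ` B = B" using assms(1,2) tau_tau by (force simp: image_image)+
  then show ?thesis using assms(3) by metis
qed

lemma tau_corners_iff: assumes "Q1 \<in> F" "Q \<in> F" shows "tau ` corners c Q1 = corners c (sig Q) \<longleftrightarrow> Q1 = Q"
proof
  assume h: "tau ` corners c Q1 = corners c (sig Q)"
  have "corners c (sig Q1) = corners c (sig Q)" using h corners_eq[OF assms(1)] by simp
  then have "sig Q1 = sig Q" using same_corners sigk(1) assms by blast
  then have "tau ` corners c Q1 = tau ` corners c Q" using corners_eq assms by simp
  then have "corners c Q1 = corners c Q" using tau_img_inj cornersV assms by blast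
  then show "Q1 = Q" using same_corners assms by blast
next
  assume "Q1 = Q"
  then show "tau ` corners c Q1 = corners c (sig Q)" using corners_eq[OF assms(2)] by simp
qed

lemma sig_inj: "inj_on sig F"
proof (rule inj_onI)
  fix Q1 Q2 assume "Q1 \<in> F" "Q2 \<in> F" "sig Q1 = sig Q2"
  then show "Q1 = Q2" using tau_corners_iff corners_eq by metis
qed

lemma sig_img: "sig ` F = F"
  using endo_inj_surj[OF finF _ sig_inj] sigk(1) by blast

lemma sum_sig: "(\<Sum>Q\<in>F. h (sig Q)) = (\<Sum>Q\<in>F. h Q)"
  using sum.reindex[OF sig_inj, of h] sig_img by simp

lemma tp_formula: assumes Q: "Q \<in> F" and j: "j < 4"
  shows "tau_push F c tau ch (sig Q) j = - ch Q (pim (kap Q) j)"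
proof -
  have k: "kap Q < 4" using sigk(2)[OF Q] .
  have "(\<Sum>Q1\<in>F. \<Sum>i<4. if tau ` corners c Q1 = corners c (sig Q) \<and> tau (crn c Q1 i) = crn c (sig Q) j then ch Q1 i else 0)
      = (\<Sum>Q1\<in>F. if Q1 = Q then (\<Sum>i<4. if i = pim (kap Q) j then ch Q i else 0) else 0)"
  proof (rule sum.cong[OF refl])
    fix Q1 assume Q1: "Q1 \<in> F"
    show "(\<Sum>i<4. if tau ` corners c Q1 = corners c (sig Q) \<and> tau (crn c Q1 i) = crn c (sig Q) j then ch Q1 i else 0)
      = (if Q1 = Q then (\<Sum>i<4. if i = pim (kap Q) j then ch Q i else 0) else 0)"
    proof (cases "Q1 = Q")
      case True
      have "tau (crn c Q i) = crn c (sig Q) j \<longleftrightarrow> i = pim (kap Q) j" if i: "i < 4" for i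
      proof -
        have "tau (crn c Q i) = c (sig Q) (pim (kap Q) i)" using tau_c[OF Q i] i by (simp add: crn_def)
        moreover have "crn c (sig Q) j = c (sig Q) j" using j by (simp add: crn_def)
        moreover have "c (sig Q) (pim (kap Q) i) = c (sig Q) j \<longleftrightarrow> pim (kap Q) i = j"
          using injc[OF sigk(1)[OF Q]] pim_lt j unfolding inj_on_def by (metis lessThan_iff)
        ultimately show ?thesis using pim_inv[OF k i j] by simp
      qed
      note H = this
      have cor: "tau ` corners c Q = corners c (sig Q)" by (rule corners_eq[OF Q])
      have "(\<Sum>i<4. if tau ` corners c Q = corners c (sig Q) \<and> tau (crn c Q i) = crn c (sig Q) j then ch Q i else 0)
        = (\<Sum>i<4. if i = pim (kap Q) j then ch Q i else 0)"
        by (rule sum.cong[OF refl]) (use H cor in auto)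
      then show ?thesis unfolding True by simp
    next
      case False
      then show ?thesis using tau_corners_iff[OF Q1 Q] by simp
    qed
  qed
  also have "\<dots> = ch Q (pim (kap Q) j)" using Q finF pim_lt by (simp add: sum.delta)
  finally show ?thesis unfolding tau_push_def by simp
qed

end

context qst begin

definition wt :: "('f \<Rightarrow> nat \<Rightarrow> complex) \<Rightarrow> 'f \<Rightarrow> nat \<Rightarrow> complex" where
  "wt \<omega> Q i = - cnj (\<omega> (sig Q) (pim (kap Q) i))"

lemma kap_t1: assumes Q: "Q \<in> F" and T: "is_type1 V F c black rho tau" shows "kap Q = 0 \<or> kap Q = 2"
proof -
  have k: "kap Q < 4" using sigk(2)[OF Q] .
  have "tau (c Q 0) = c (sig Q) (kap Q)" using tau_c[OF Q, of 0] k by (simp add: pim_def)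
  moreover have "black (tau (c Q 0))" using T cV4[OF Q] col[OF Q] unfolding is_type1_def by auto
  ultimately have "black (c (sig Q) (kap Q))" by simp
  then show ?thesis using k4[OF k] col[OF sigk(1)[OF Q]] by auto
qed

lemma kap_t2: assumes Q: "Q \<in> F" and T: "is_type2 V F c black rho tau" shows "kap Q = 1 \<or> kap Q = 3"
proof -
  have k: "kap Q < 4" using sigk(2)[OF Q] .
  have "tau (c Q 0) = c (sig Q) (kap Q)" using tau_c[OF Q, of 0] k by (simp add: pim_def)
  moreover have "\<not> black (tau (c Q 0))" using T cV4[OF Q] col[OF Q] unfolding is_type2_def by auto
  ultimately have "\<not> black (c (sig Q) (kap Q))" by simp
  then show ?thesis using k4[OF k] col[OF sigk(1)[OF Q]] by auto
qed

lemma rho_t1: "Q \<in> F \<Longrightarrow> is_type1 V F c black rho tau \<Longrightarrow> rho (sig Q) = cnj (rho Q)"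
  using corners_eq sigk(1) unfolding is_type1_def by blast
lemma rho_t2: "Q \<in> F \<Longrightarrow> is_type2 V F c black rho tau \<Longrightarrow> rho (sig Q) = 1 / cnj (rho Q)"
  using corners_eq sigk(1) unfolding is_type2_def by blast

lemma td_wt: assumes td: "type_diamond F \<omega>" shows "type_diamond F (wt \<omega>)"
  unfolding type_diamond_def
proof
  fix Q assume Q: "Q \<in> F"
  have d: "\<omega> (sig Q) 1 = - \<omega> (sig Q) 3" "\<omega> (sig Q) 2 = - \<omega> (sig Q) 0" using td sigk(1)[OF Q] unfolding type_diamond_def by auto
  show "wt \<omega> Q 1 = - wt \<omega> Q 3 \<and> wt \<omega> Q 2 = - wt \<omega> Q 0"
    using k4[OF sigk(2)[OF Q]] d unfolding wt_def by (elim disjE; simp only: pim_vals; simp)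
qed

lemma cf_wt: assumes cf: "closed_form V F c \<omega>" shows "closed_form V F c (wt \<omega>)"
  unfolding closed_form_def
proof (intro conjI ballI)
  fix Q assume Q: "Q \<in> F"
  have "(\<Sum>i<4. wt \<omega> Q i) = - cnj (\<Sum>i<4. \<omega> (sig Q) (pim (kap Q) i))"
    unfolding wt_def cnj_sum sum_negf ..
  also have "\<dots> = - cnj (\<Sum>i<4. \<omega> (sig Q) i)" using sum_pim[OF sigk(2)[OF Q]] by simp
  also have "\<dots> = 0" using cf sigk(1)[OF Q] unfolding closed_form_def by simp
  finally show "(\<Sum>i<4. wt \<omega> Q i) = 0" .
next
  fix v assume v: "v \<in> V"
  have "(\<Sum>Q\<in>F. \<Sum>i<4. if crn c Q i = v then wt \<omega> Q i else 0)
      = (\<Sum>Q\<in>F. \<Sum>i<4. if c (sig Q) (pim (kap Q) i) = tau v then - cnj (\<omega> (sig Q) (pim (kap Q) i)) else 0)"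
  proof (intro sum.cong refl)
    fix Q i assume Q: "Q \<in> F" and i: "i \<in> {..<4::nat}"
    have "crn c Q i = c Q i" using i by (simp add: crn_def)
    moreover have "c Q i = v \<longleftrightarrow> tau (c Q i) = tau v" using tau_inj cV[OF Q] i v by auto
    ultimately show "(if crn c Q i = v then wt \<omega> Q i else 0) = (if c (sig Q) (pim (kap Q) i) = tau v then - cnj (\<omega> (sig Q) (pim (kap Q) i)) else 0)"
      using tau_c[OF Q] i unfolding wt_def by auto
  qed
  also have "\<dots> = (\<Sum>Q\<in>F. \<Sum>j<4. if c (sig Q) j = tau v then - cnj (\<omega> (sig Q) j) else 0)"
  proof (rule sum.cong[OF refl])
    fix Q assume Q: "Q \<in> F"
    show "(\<Sum>i<4. if c (sig Q) (pim (kap Q) i) = tau v then - cnj (\<omega> (sig Q) (pim (kap Q) i)) else 0)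
      = (\<Sum>j<4. if c (sig Q) j = tau v then - cnj (\<omega> (sig Q) j) else 0)"
      using sum_pim[OF sigk(2)[OF Q], of "\<lambda>j. if c (sig Q) j = tau v then - cnj (\<omega> (sig Q) j) else 0"] by simp
  qed
  also have "\<dots> = (\<Sum>Q\<in>F. \<Sum>j<4. if c Q j = tau v then - cnj (\<omega> Q j) else 0)"
    by (rule sum_sig)
  also have "\<dots> = - cnj (\<Sum>Q\<in>F. \<Sum>j<4. if crn c Q j = tau v then \<omega> Q j else 0)"
    unfolding cnj_sum sum_negf[symmetric] by (intro sum.cong refl) (auto simp: crn_def)
  also have "\<dots> = 0" using cf tauV[OF v] unfolding closed_form_def by simp
  finally show "(\<Sum>Q\<in>F. \<Sum>i<4. if crn c Q i = v then wt \<omega> Q i else 0) = 0" .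
qed

lemma holo_wt:
  assumes td: "type_diamond F \<omega>" and holo: "\<forall>Q\<in>F. dW \<omega> Q = \<i> * rho Q * dB \<omega> Q"
    and pos: "\<forall>Q\<in>F. Re (rho Q) > 0"
    and T: "is_type1 V F c black rho tau \<or> is_type2 V F c black rho tau"
  shows "\<forall>Q\<in>F. dW (wt \<omega>) Q = \<i> * rho Q * dB (wt \<omega>) Q"
proof
  fix Q assume Q: "Q \<in> F"
  let ?a = "\<omega> (sig Q) 1" and ?r = "rho (sig Q)"
  have sQ: "sig Q \<in> F" using sigk(1)[OF Q] .
  have d3: "\<omega> (sig Q) 3 = - ?a" and d0: "\<omega> (sig Q) 0 = - \<omega> (sig Q) 2" using td sQ unfolding type_diamond_def by auto
  have d2: "\<omega> (sig Q) 2 = \<i> * ?r * ?a" using holo sQ unfolding dB_def dW_def by auto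
  have rnz: "rho Q \<noteq> 0" using pos Q by auto
  show "dW (wt \<omega>) Q = \<i> * rho Q * dB (wt \<omega>) Q"
  proof (cases "is_type1 V F c black rho tau")
    case True
    have r: "?r = cnj (rho Q)" using rho_t1[OF Q True] .
    show ?thesis using kap_t1[OF Q True] unfolding dB_def dW_def wt_def
      by (elim disjE; simp only: pim_vals; simp add: d0 d2 d3 r algebra_simps)
  next
    case False
    then have T2: "is_type2 V F c black rho tau" using T by simp
    have r: "?r = 1 / cnj (rho Q)" using rho_t2[OF Q T2] .
    have rc: "cnj (rho Q) \<noteq> 0" using rnz by simp
    show ?thesis using kap_t2[OF Q T2] unfolding dB_def dW_def wt_def
      by (elim disjE; simp only: pim_vals; simp add: d0 d2 d3 r field_simps rnz rc)
  qed
qed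

lemma PB_tp: "PB F (tau_push F c tau ch) u = (\<Sum>Q\<in>F. of_int (ch Q (pim (kap Q) 3) - ch Q (pim (kap Q) 1)) * u (sig Q))"
proof -
  have "PB F (tau_push F c tau ch) u = (\<Sum>Q\<in>F. of_int (tau_push F c tau ch (sig Q) 1 - tau_push F c tau ch (sig Q) 3) * u (sig Q))"
    unfolding PB_def by (rule sum_sig[symmetric])
  also have "\<dots> = (\<Sum>Q\<in>F. of_int (ch Q (pim (kap Q) 3) - ch Q (pim (kap Q) 1)) * u (sig Q))"
    by (intro sum.cong refl) (simp add: tp_formula)
  finally show ?thesis .
qed

lemma PW_tp: "PW F (tau_push F c tau ch) u = (\<Sum>Q\<in>F. of_int (ch Q (pim (kap Q) 0) - ch Q (pim (kap Q) 2)) * u (sig Q))"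
proof -
  have "PW F (tau_push F c tau ch) u = (\<Sum>Q\<in>F. of_int (tau_push F c tau ch (sig Q) 2 - tau_push F c tau ch (sig Q) 0) * u (sig Q))"
    unfolding PW_def by (rule sum_sig[symmetric])
  also have "\<dots> = (\<Sum>Q\<in>F. of_int (ch Q (pim (kap Q) 0) - ch Q (pim (kap Q) 2)) * u (sig Q))"
    by (intro sum.cong refl) (simp add: tp_formula)
  finally show ?thesis .
qed

lemma per_t1:
  assumes td: "type_diamond F \<omega>" and T: "is_type1 V F c black rho tau"
  shows "PB F ch (dB (wt \<omega>)) = cnj (PB F (tau_push F c tau ch) (dB \<omega>))"
    "PW F ch (dW (wt \<omega>)) = cnj (PW F (tau_push F c tau ch) (dW \<omega>))"
proof -
  show "PB F ch (dB (wt \<omega>)) = cnj (PB F (tau_push F c tau ch) (dB \<omega>))"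
    unfolding PB_tp cnj_sum unfolding PB_def
  proof (intro sum.cong refl)
    fix Q assume Q: "Q \<in> F"
    have d3: "\<omega> (sig Q) 3 = - \<omega> (sig Q) 1" using td sigk(1)[OF Q] unfolding type_diamond_def by auto
    show "of_int (ch Q 1 - ch Q 3) * dB (wt \<omega>) Q = cnj (of_int (ch Q (pim (kap Q) 3) - ch Q (pim (kap Q) 1)) * dB \<omega> (sig Q))"
      using kap_t1[OF Q T] unfolding dB_def wt_def by (elim disjE; simp only: pim_vals; simp add: d3 algebra_simps)
  qed
  show "PW F ch (dW (wt \<omega>)) = cnj (PW F (tau_push F c tau ch) (dW \<omega>))"
    unfolding PW_tp cnj_sum unfolding PW_def
  proof (intro sum.cong refl)
    fix Q assume Q: "Q \<in> F"
    have d0: "\<omega> (sig Q) 0 = - \<omega> (sig Q) 2" using td sigk(1)[OF Q] unfolding type_diamond_def by auto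
    show "of_int (ch Q 2 - ch Q 0) * dW (wt \<omega>) Q = cnj (of_int (ch Q (pim (kap Q) 0) - ch Q (pim (kap Q) 2)) * dW \<omega> (sig Q))"
      using kap_t1[OF Q T] unfolding dW_def wt_def by (elim disjE; simp only: pim_vals; simp add: d0 algebra_simps)
  qed
qed

lemma per_t2:
  assumes td: "type_diamond F \<omega>" and T: "is_type2 V F c black rho tau"
  shows "PB F ch (dB (wt \<omega>)) = cnj (PW F (tau_push F c tau ch) (dW \<omega>))"
    "PW F ch (dW (wt \<omega>)) = cnj (PB F (tau_push F c tau ch) (dB \<omega>))"
proof -
  show "PB F ch (dB (wt \<omega>)) = cnj (PW F (tau_push F c tau ch) (dW \<omega>))"
    unfolding PW_tp cnj_sum unfolding PB_def
  proof (intro sum.cong refl)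
    fix Q assume Q: "Q \<in> F"
    have d0: "\<omega> (sig Q) 0 = - \<omega> (sig Q) 2" using td sigk(1)[OF Q] unfolding type_diamond_def by auto
    show "of_int (ch Q 1 - ch Q 3) * dB (wt \<omega>) Q = cnj (of_int (ch Q (pim (kap Q) 0) - ch Q (pim (kap Q) 2)) * dW \<omega> (sig Q))"
      using kap_t2[OF Q T] unfolding dB_def dW_def wt_def by (elim disjE; simp only: pim_vals; simp add: d0 algebra_simps)
  qed
  show "PW F ch (dW (wt \<omega>)) = cnj (PB F (tau_push F c tau ch) (dB \<omega>))"
    unfolding PB_tp cnj_sum unfolding PW_def
  proof (intro sum.cong refl)
    fix Q assume Q: "Q \<in> F"
    have d3: "\<omega> (sig Q) 3 = - \<omega> (sig Q) 1" using td sigk(1)[OF Q] unfolding type_diamond_def by auto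
    show "of_int (ch Q 2 - ch Q 0) * dW (wt \<omega>) Q = cnj (of_int (ch Q (pim (kap Q) 3) - ch Q (pim (kap Q) 1)) * dB \<omega> (sig Q))"
      using kap_t2[OF Q T] unfolding dB_def dW_def wt_def by (elim disjE; simp only: pim_vals; simp add: d3 algebra_simps)
  qed
qed

end

lemma PW_neg: "PW F (\<lambda>Q i. - a Q i) u = - PW F a u"
  unfolding PW_def by (simp add: sum_negf[symmetric] algebra_simps)

lemma PW_uneg: "PW F ch (\<lambda>Q. - f Q) = - PW F ch f"
  unfolding PW_def by (simp add: sum_negf[symmetric])
lemma PB_uneg: "PB F ch (\<lambda>Q. - f Q) = - PB F ch f"
  unfolding PB_def by (simp add: sum_negf[symmetric])

context qsb begin

lemma rel_real:
  assumes orth: "\<forall>Q\<in>F. rho Q \<in> \<real>" and hd: "disc_holo_diff V F c rho \<omega>" and pos: "\<forall>Q\<in>F. Re (rho Q) > 0"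
    and ra: "\<forall>j<g. s * cnj (PB F (path_chain (\<alpha> j)) (dB \<omega>)) = PB F (path_chain (\<alpha> j)) (dB \<omega>) \<and>
                  - s * cnj (PW F (path_chain (\<alpha> j)) (dW \<omega>)) = PW F (path_chain (\<alpha> j)) (dW \<omega>)"
    and j: "j < g"
  shows "s * cnj (PB F (path_chain (\<beta> j)) (dB \<omega>)) = PB F (path_chain (\<beta> j)) (dB \<omega>) \<and>
         - s * cnj (PW F (path_chain (\<beta> j)) (dW \<omega>)) = PW F (path_chain (\<beta> j)) (dW \<omega>)"
proof -
  have td: "type_diamond F \<omega>" and cf: "closed_form V F c \<omega>" using hd unfolding disc_holo_diff_def by auto
  have cB: "cocB V F c (dB \<omega>)" by (rule cf_cocB[OF cf td])
  have cW: "cocW V F c (dW \<omega>)" by (rule cf_cocW[OF cf td])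
  have h: "\<forall>Q\<in>F. dW \<omega> Q = \<i> * rho Q * dB \<omega> Q" using holo_rel[OF hd] by auto
  have cB1: "cocB V F c (\<lambda>Q. s * cnj (dB \<omega> Q))" by (rule cocB_scale[OF cocB_cnj[OF cB]])
  have cW1: "cocW V F c (\<lambda>Q. - s * cnj (dW \<omega> Q))" by (rule cocW_scale[OF cocW_cnj[OF cW]])
  have h1: "\<forall>Q\<in>F. - s * cnj (dW \<omega> Q) = \<i> * rho Q * (s * cnj (dB \<omega> Q))"
  proof
    fix Q assume Q: "Q \<in> F"
    have "cnj (rho Q) = rho Q" using orth Q by (simp add: Reals_cnj_iff)
    then show "- s * cnj (dW \<omega> Q) = \<i> * rho Q * (s * cnj (dB \<omega> Q))" using h Q by simp
  qed
  have za: "\<forall>j<g. PB F (path_chain (\<alpha> j)) (\<lambda>Q. s * cnj (dB \<omega> Q)) = PB F (path_chain (\<alpha> j)) (dB \<omega>) \<and>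
      PW F (path_chain (\<alpha> j)) (\<lambda>Q. - s * cnj (dW \<omega> Q)) = PW F (path_chain (\<alpha> j)) (dW \<omega>)"
    using ra by (simp add: PB_uscale PW_uscale PB_cnj PW_cnj PW_uneg PB_uneg)
  from uniq[OF cB1 cW1 h1 cB cW h pos za j] show ?thesis by (simp add: PB_uscale PW_uscale PB_cnj PW_cnj PW_uneg PB_uneg)
qed

end

context qst begin

lemma rel_t1:
  assumes T: "is_type1 V F c black rho tau"
    and ta: "\<forall>k<g. homologous F c (tau_push F c tau (path_chain (\<alpha> k))) (path_chain (\<alpha> k))"
    and tb: "\<forall>k<g. homologous F c (tau_push F c tau (path_chain (\<beta> k))) (\<lambda>Q i. - path_chain (\<beta> k) Q i)"
    and hd: "disc_holo_diff V F c rho \<omega>" and pos: "\<forall>Q\<in>F. Re (rho Q) > 0"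
    and ra: "\<forall>j<g. cnj (PB F (path_chain (\<alpha> j)) (dB \<omega>)) = PB F (path_chain (\<alpha> j)) (dB \<omega>) \<and>
                  cnj (PW F (path_chain (\<alpha> j)) (dW \<omega>)) = PW F (path_chain (\<alpha> j)) (dW \<omega>)"
    and j: "j < g"
  shows "PB F (path_chain (\<beta> j)) (dB \<omega>) = - cnj (PB F (path_chain (\<beta> j)) (dB \<omega>)) \<and>
         PW F (path_chain (\<beta> j)) (dW \<omega>) = - cnj (PW F (path_chain (\<beta> j)) (dW \<omega>))"
proof -
  have td: "type_diamond F \<omega>" and cf: "closed_form V F c \<omega>" using hd unfolding disc_holo_diff_def by auto
  have cB: "cocB V F c (dB \<omega>)" by (rule cf_cocB[OF cf td])
  have cW: "cocW V F c (dW \<omega>)" by (rule cf_cocW[OF cf td])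
  have h: "\<forall>Q\<in>F. dW \<omega> Q = \<i> * rho Q * dB \<omega> Q" using holo_rel[OF hd] by auto
  have cB1: "cocB V F c (dB (wt \<omega>))" by (rule cf_cocB[OF cf_wt[OF cf] td_wt[OF td]])
  have cW1: "cocW V F c (dW (wt \<omega>))" by (rule cf_cocW[OF cf_wt[OF cf] td_wt[OF td]])
  have h1: "\<forall>Q\<in>F. dW (wt \<omega>) Q = \<i> * rho Q * dB (wt \<omega>) Q" using holo_wt[OF td h pos] T by blast
  have za: "\<forall>j<g. PB F (path_chain (\<alpha> j)) (dB (wt \<omega>)) = PB F (path_chain (\<alpha> j)) (dB \<omega>) \<and>
      PW F (path_chain (\<alpha> j)) (dW (wt \<omega>)) = PW F (path_chain (\<alpha> j)) (dW \<omega>)"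
  proof (intro allI impI conjI)
    fix j assume j: "j < g"
    show "PB F (path_chain (\<alpha> j)) (dB (wt \<omega>)) = PB F (path_chain (\<alpha> j)) (dB \<omega>)"
      unfolding per_t1[OF td T] homol_PB[OF cB ta[rule_format, OF j]] using ra j by simp
    show "PW F (path_chain (\<alpha> j)) (dW (wt \<omega>)) = PW F (path_chain (\<alpha> j)) (dW \<omega>)"
      unfolding per_t1[OF td T] homol_PW[OF cW ta[rule_format, OF j]] using ra j by simp
  qed
  from uniq[OF cB1 cW1 h1 cB cW h pos za j] show ?thesis
    unfolding per_t1[OF td T] homol_PB[OF cB tb[rule_format, OF j]] homol_PW[OF cW tb[rule_format, OF j]] PB_neg PW_neg
    by simp
qed

lemma rel_t2:
  assumes T: "is_type2 V F c black rho tau"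
    and ta: "\<forall>k<g. homologous F c (tau_push F c tau (path_chain (\<alpha> k))) (path_chain (\<alpha> k))"
    and tb: "\<forall>k<g. homologous F c (tau_push F c tau (path_chain (\<beta> k))) (\<lambda>Q i. - path_chain (\<beta> k) Q i)"
    and hd1: "disc_holo_diff V F c rho \<omega>1" and hd2: "disc_holo_diff V F c rho \<omega>2" and pos: "\<forall>Q\<in>F. Re (rho Q) > 0"
    and ra: "\<forall>j<g. cnj (PW F (path_chain (\<alpha> j)) (dW \<omega>1)) = PB F (path_chain (\<alpha> j)) (dB \<omega>2) \<and>
                  cnj (PB F (path_chain (\<alpha> j)) (dB \<omega>1)) = PW F (path_chain (\<alpha> j)) (dW \<omega>2)"
    and j: "j < g"
  shows "- cnj (PW F (path_chain (\<beta> j)) (dW \<omega>1)) = PB F (path_chain (\<beta> j)) (dB \<omega>2) \<and>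
         - cnj (PB F (path_chain (\<beta> j)) (dB \<omega>1)) = PW F (path_chain (\<beta> j)) (dW \<omega>2)"
proof -
  have td: "type_diamond F \<omega>1" and cf: "closed_form V F c \<omega>1" using hd1 unfolding disc_holo_diff_def by auto
  have td2: "type_diamond F \<omega>2" and cf2: "closed_form V F c \<omega>2" using hd2 unfolding disc_holo_diff_def by auto
  have cB: "cocB V F c (dB \<omega>1)" by (rule cf_cocB[OF cf td])
  have cW: "cocW V F c (dW \<omega>1)" by (rule cf_cocW[OF cf td])
  have cB2: "cocB V F c (dB \<omega>2)" by (rule cf_cocB[OF cf2 td2])
  have cW2: "cocW V F c (dW \<omega>2)" by (rule cf_cocW[OF cf2 td2])
  have h: "\<forall>Q\<in>F. dW \<omega>1 Q = \<i> * rho Q * dB \<omega>1 Q" using holo_rel[OF hd1] by auto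
  have h2: "\<forall>Q\<in>F. dW \<omega>2 Q = \<i> * rho Q * dB \<omega>2 Q" using holo_rel[OF hd2] by auto
  have cB1: "cocB V F c (dB (wt \<omega>1))" by (rule cf_cocB[OF cf_wt[OF cf] td_wt[OF td]])
  have cW1: "cocW V F c (dW (wt \<omega>1))" by (rule cf_cocW[OF cf_wt[OF cf] td_wt[OF td]])
  have h1: "\<forall>Q\<in>F. dW (wt \<omega>1) Q = \<i> * rho Q * dB (wt \<omega>1) Q" using holo_wt[OF td h pos] T by blast
  have za: "\<forall>j<g. PB F (path_chain (\<alpha> j)) (dB (wt \<omega>1)) = PB F (path_chain (\<alpha> j)) (dB \<omega>2) \<and>
      PW F (path_chain (\<alpha> j)) (dW (wt \<omega>1)) = PW F (path_chain (\<alpha> j)) (dW \<omega>2)"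
  proof (intro allI impI conjI)
    fix j assume j: "j < g"
    show "PB F (path_chain (\<alpha> j)) (dB (wt \<omega>1)) = PB F (path_chain (\<alpha> j)) (dB \<omega>2)"
      unfolding per_t2[OF td T] homol_PW[OF cW ta[rule_format, OF j]] using ra j by simp
    show "PW F (path_chain (\<alpha> j)) (dW (wt \<omega>1)) = PW F (path_chain (\<alpha> j)) (dW \<omega>2)"
      unfolding per_t2[OF td T] homol_PB[OF cB ta[rule_format, OF j]] using ra j by simp
  qed
  from uniq[OF cB1 cW1 h1 cB2 cW2 h2 pos za j] show ?thesis
    unfolding per_t2[OF td T] homol_PB[OF cB tb[rule_format, OF j]] homol_PW[OF cW tb[rule_format, OF j]] PB_neg PW_neg
    by simp
qed

end

theorem mainTheorem8:
  fixes V :: "'v set" and F :: "'f set" and c :: "'f \<Rightarrow> nat \<Rightarrow> 'v" and black :: "'v \<Rightarrow> bool"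
    and rho :: "'f \<Rightarrow> complex" and tau :: "'v \<Rightarrow> 'v" and g :: nat
    and \<alpha> \<beta> :: "nat \<Rightarrow> 'f xedge list"
    and \<omega>B \<omega>W :: "nat \<Rightarrow> 'f \<Rightarrow> nat \<Rightarrow> complex"
  assumes drs: "discrete_riemann_surface V F c black rho"
    and genus: "has_genus V F c g"
    and inv: "antihol_involution V F c black rho tau"
    and orth: "orthodiagonal F rho"
    and Mcurve: "num_real_ovals V F c black rho tau = g + 1"
    and basis: "symplectic_X_basis F c black g \<alpha> \<beta>"
    and tau_a: "\<forall>k<g. homologous F c (tau_push F c tau (path_chain (\<alpha> k))) (path_chain (\<alpha> k))"
    and tau_b: "\<forall>k<g. homologous F c (tau_push F c tau (path_chain (\<beta> k))) (\<lambda>Q i. - path_chain (\<beta> k) Q i)"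
    and omB: "\<forall>k<g. disc_holo_diff V F c rho (\<omega>B k) \<and>
                (\<forall>j<g. bper c black (\<alpha> j) (\<omega>B k) = (if j = k then 1 else 0) \<and>
                       wper c black (\<alpha> j) (\<omega>B k) = 0)"
    and omW: "\<forall>k<g. disc_holo_diff V F c rho (\<omega>W k) \<and>
                (\<forall>j<g. wper c black (\<alpha> j) (\<omega>W k) = (if j = k then 1 else 0) \<and>
                       bper c black (\<alpha> j) (\<omega>W k) = 0)"
  shows "(is_type1 V F c black rho tau \<longrightarrow>
            (\<forall>j<g. \<forall>k<g.
               bper c black (\<beta> j) (\<omega>B k) = 0 \<and> wper c black (\<beta> j) (\<omega>W k) = 0 \<and>
               Re (bper c black (\<beta> j) (\<omega>W k)) = 0 \<and> Re (wper c black (\<beta> j) (\<omega>B k)) = 0))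
       \<and> (is_type2 V F c black rho tau \<longrightarrow>
            (\<forall>j<g. \<forall>k<g.
               bper c black (\<beta> j) (\<omega>B k) = - wper c black (\<beta> j) (\<omega>W k) \<and>
               wper c black (\<beta> j) (\<omega>B k) = bper c black (\<beta> j) (\<omega>W k) \<and>
               bper c black (\<beta> j) (\<omega>B k) \<in> \<real> \<and>
               bper c black (\<beta> j) (\<omega>B k) = - bper c black (\<beta> k) (\<omega>B j) \<and>
               Re (wper c black (\<beta> j) (\<omega>B k)) = 0 \<and>
               wper c black (\<beta> j) (\<omega>B k) = wper c black (\<beta> k) (\<omega>B j)))"
proof -
  have qsurf: "quad_surface V F c black" and pos: "\<forall>Q\<in>F. Re (rho Q) > 0"
    using drs by (auto simp: discrete_riemann_surface_def)
  interpret qst V F c black g \<alpha> \<beta> tau rho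
    by unfold_locales (simp_all add: qsurf basis inv)
  have orth': "\<forall>Q\<in>F. rho Q \<in> \<real>" using orth by (simp add: orthodiagonal_def)
  have hdB: "disc_holo_diff V F c rho (\<omega>B k)" if "k < g" for k using omB that by blast
  have hdW: "disc_holo_diff V F c rho (\<omega>W k)" if "k < g" for k using omW that by blast
  have tdB: "type_diamond F (\<omega>B k)" if "k < g" for k using hdB[OF that] by (simp add: disc_holo_diff_def)
  have tdW: "type_diamond F (\<omega>W k)" if "k < g" for k using hdW[OF that] by (simp add: disc_holo_diff_def)
  have cfB: "closed_form V F c (\<omega>B k)" if "k < g" for k using hdB[OF that] by (simp add: disc_holo_diff_def)
  have cfW: "closed_form V F c (\<omega>W k)" if "k < g" for k using hdW[OF that] by (simp add: disc_holo_diff_def)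
  define BB where "BB j k = PB F (path_chain (\<beta> j)) (dB (\<omega>B k))" for j k
  define WB where "WB j k = PW F (path_chain (\<beta> j)) (dW (\<omega>B k))" for j k
  define BW where "BW j k = PB F (path_chain (\<beta> j)) (dB (\<omega>W k))" for j k
  define WW where "WW j k = PW F (path_chain (\<beta> j)) (dW (\<omega>W k))" for j k
  have eBB: "bper c black (\<beta> j) (\<omega>B k) = BB j k" if "j < g" "k < g" for j k
    unfolding BB_def by (rule bper_PB[OF pathB[OF that(1)] tdB[OF that(2)]])
  have eWB: "wper c black (\<beta> j) (\<omega>B k) = WB j k" if "j < g" "k < g" for j k
    unfolding WB_def by (rule wper_PW[OF pathB[OF that(1)] tdB[OF that(2)]])
  have eBW: "bper c black (\<beta> j) (\<omega>W k) = BW j k" if "j < g" "k < g" for j k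
    unfolding BW_def by (rule bper_PB[OF pathB[OF that(1)] tdW[OF that(2)]])
  have eWW: "wper c black (\<beta> j) (\<omega>W k) = WW j k" if "j < g" "k < g" for j k
    unfolding WW_def by (rule wper_PW[OF pathB[OF that(1)] tdW[OF that(2)]])
  have aBB: "PB F (path_chain (\<alpha> j)) (dB (\<omega>B k)) = (if j = k then 1 else 0)" if "j < g" "k < g" for j k
    using bper_PB[OF pathA[OF that(1)] tdB[OF that(2)]] omB that by simp
  have aWB: "PW F (path_chain (\<alpha> j)) (dW (\<omega>B k)) = 0" if "j < g" "k < g" for j k
    using wper_PW[OF pathA[OF that(1)] tdB[OF that(2)]] omB that by simp
  have aBW: "PB F (path_chain (\<alpha> j)) (dB (\<omega>W k)) = 0" if "j < g" "k < g" for j k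
    using bper_PB[OF pathA[OF that(1)] tdW[OF that(2)]] omW that by simp
  have aWW: "PW F (path_chain (\<alpha> j)) (dW (\<omega>W k)) = (if j = k then 1 else 0)" if "j < g" "k < g" for j k
    using wper_PW[OF pathA[OF that(1)] tdW[OF that(2)]] omW that by simp
  have realB: "cnj (BB j k) = BB j k \<and> - cnj (WB j k) = WB j k" if j: "j < g" and k: "k < g" for j k
    using rel_real[OF orth' hdB[OF k] pos, of 1 j] j aBB[OF _ k] aWB[OF _ k] unfolding BB_def WB_def by simp
  have realW: "- cnj (BW j k) = BW j k \<and> cnj (WW j k) = WW j k" if j: "j < g" and k: "k < g" for j k
    using rel_real[OF orth' hdW[OF k] pos, of "-1" j] j aBW[OF _ k] aWW[OF _ k] unfolding BW_def WW_def by simp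
  show ?thesis
  proof (rule conjI; intro impI allI)
    fix j k assume T: "is_type1 V F c black rho tau" and j: "j < g" and k: "k < g"
    have t1B: "BB j k = - cnj (BB j k) \<and> WB j k = - cnj (WB j k)"
      using rel_t1[OF T tau_a tau_b hdB[OF k] pos _ j] aBB[OF _ k] aWB[OF _ k] unfolding BB_def WB_def by simp
    have t1W: "BW j k = - cnj (BW j k) \<and> WW j k = - cnj (WW j k)"
      using rel_t1[OF T tau_a tau_b hdW[OF k] pos _ j] aBW[OF _ k] aWW[OF _ k] unfolding BW_def WW_def by simp
    have z1: "BB j k = 0" using t1B realB[OF j k] by simp
    have z2: "WW j k = 0" using t1W realW[OF j k] by simp
    have "Re (BW j k) = Re (- cnj (BW j k))" using t1W by simp
    then have z3: "Re (BW j k) = 0" by simp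
    have "Re (WB j k) = Re (- cnj (WB j k))" using t1B by simp
    then have z4: "Re (WB j k) = 0" by simp
    show "bper c black (\<beta> j) (\<omega>B k) = 0 \<and> wper c black (\<beta> j) (\<omega>W k) = 0 \<and>
          Re (bper c black (\<beta> j) (\<omega>W k)) = 0 \<and> Re (wper c black (\<beta> j) (\<omega>B k)) = 0"
      unfolding eBB[OF j k] eWB[OF j k] eBW[OF j k] eWW[OF j k]
      using z1 z2 z3 z4 by simp
  next
    fix j k assume T: "is_type2 V F c black rho tau" and j: "j < g" and k: "k < g"
    have t2: "- cnj (WB j k) = BW j k \<and> - cnj (BB j k) = WW j k" if j: "j < g" and k: "k < g" for j k
      using rel_t2[OF T tau_a tau_b hdB[OF k] hdW[OF k] pos _ j] aBB[OF _ k] aWB[OF _ k] aBW[OF _ k] aWW[OF _ k]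
      unfolding BB_def WB_def BW_def WW_def by simp
    have cBB: "cocB V F c (dB (\<omega>B k))" if "k < g" for k by (rule cf_cocB[OF cfB[OF that] tdB[OF that]])
    have cWB: "cocW V F c (dW (\<omega>B k))" if "k < g" for k by (rule cf_cocW[OF cfB[OF that] tdB[OF that]])
    have cBW: "cocB V F c (dB (\<omega>W k))" if "k < g" for k by (rule cf_cocB[OF cfW[OF that] tdW[OF that]])
    have cWW: "cocW V F c (dW (\<omega>W k))" if "k < g" for k by (rule cf_cocW[OF cfW[OF that] tdW[OF that]])
    have hB: "\<forall>Q\<in>F. dW (\<omega>B k) Q = \<i> * rho Q * dB (\<omega>B k) Q" if "k < g" for k using holo_rel[OF hdB[OF that]] by auto
    have hW: "\<forall>Q\<in>F. dW (\<omega>W k) Q = \<i> * rho Q * dB (\<omega>W k) Q" if "k < g" for k using holo_rel[OF hdW[OF that]] by auto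
    have RB1: "WW a b = BB b a" if a: "a < g" and b: "b < g" for a b
    proof -
      have "(\<Sum>Q\<in>F. dB (\<omega>B a) Q * dW (\<omega>W b) Q) = (\<Sum>Q\<in>F. dB (\<omega>W b) Q * dW (\<omega>B a) Q)"
        using hB[OF a] hW[OF b] by (intro sum.cong refl) (simp add: algebra_simps)
      moreover have "(\<Sum>Q\<in>F. dB (\<omega>B a) Q * dW (\<omega>W b) Q) = (\<Sum>k<g. (if k = a then WW k b else 0) - (if k = b then BB k a else 0))"
        unfolding RB[OF cBB[OF a] cWW[OF b]] WW_def BB_def
        by (intro sum.cong refl) (simp add: aBB[OF _ a] aWW[OF _ b])
      moreover have "(\<Sum>Q\<in>F. dB (\<omega>W b) Q * dW (\<omega>B a) Q) = (\<Sum>k<g. (0::complex))"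
        unfolding RB[OF cBW[OF b] cWB[OF a]]
        by (intro sum.cong refl) (simp add: aBW[OF _ b] aWB[OF _ a])
      ultimately show ?thesis using a b by (simp add: sum_subtractf sum.delta)
    qed
    have RB2: "BW a b = BW b a" if a: "a < g" and b: "b < g" for a b
    proof -
      have "(\<Sum>Q\<in>F. dB (\<omega>W a) Q * dW (\<omega>W b) Q) = (\<Sum>Q\<in>F. dB (\<omega>W b) Q * dW (\<omega>W a) Q)"
        using hW[OF a] hW[OF b] by (intro sum.cong refl) (simp add: algebra_simps)
      moreover have "(\<Sum>Q\<in>F. dB (\<omega>W a) Q * dW (\<omega>W b) Q) = (\<Sum>k<g. - (if k = b then BW k a else 0))"
        unfolding RB[OF cBW[OF a] cWW[OF b]] BW_def
        by (intro sum.cong refl) (simp add: aBW[OF _ a] aWW[OF _ b])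
      moreover have "(\<Sum>Q\<in>F. dB (\<omega>W b) Q * dW (\<omega>W a) Q) = (\<Sum>k<g. - (if k = a then BW k b else 0))"
        unfolding RB[OF cBW[OF b] cWW[OF a]] BW_def
        by (intro sum.cong refl) (simp add: aBW[OF _ b] aWW[OF _ a])
      ultimately show ?thesis using a b by (simp add: sum_negf sum.delta)
    qed
    have r1: "cnj (BB j k) = BB j k" "- cnj (WB j k) = WB j k" using realB[OF j k] by auto
    have r2: "- cnj (BW j k) = BW j k" "cnj (WW j k) = WW j k" using realW[OF j k] by auto
    have r1': "cnj (BB k j) = BB k j" using realB[OF k j] by auto
    have s1: "- cnj (WB j k) = BW j k" "- cnj (BB j k) = WW j k" using t2[OF j k] by auto
    have s2: "- cnj (BB k j) = WW k j" using t2[OF k j] by auto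
    have s3: "- cnj (WB k j) = BW k j" using t2[OF k j] by auto
    have r3: "- cnj (WB k j) = WB k j" using realB[OF k j] by auto
    have WWBB: "WW j k = - BB j k" using s1(2) r1(1) by simp
    have WBBW: "WB j k = BW j k" using s1(1) r1(2) by simp
    have BBreal: "BB j k \<in> \<real>" using r1(1) by (simp add: Reals_cnj_iff)
    have skew: "BB j k = - BB k j"
    proof -
      have "BB j k = WW k j" using RB1[OF k j] by simp
      also have "\<dots> = - BB k j" using s2 r1' by simp
      finally show ?thesis .
    qed
    have "Re (WB j k) = Re (- cnj (WB j k))" using r1(2) by simp
    then have ReWB: "Re (WB j k) = 0" by simp
    have symWB: "WB j k = WB k j"
    proof -
      have "WB j k = BW j k" by (rule WBBW)
      also have "\<dots> = BW k j" using RB2[OF j k] .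
      also have "\<dots> = WB k j" using s3 r3 by simp
      finally show ?thesis .
    qed
    show "bper c black (\<beta> j) (\<omega>B k) = - wper c black (\<beta> j) (\<omega>W k) \<and>
          wper c black (\<beta> j) (\<omega>B k) = bper c black (\<beta> j) (\<omega>W k) \<and>
          bper c black (\<beta> j) (\<omega>B k) \<in> \<real> \<and>
          bper c black (\<beta> j) (\<omega>B k) = - bper c black (\<beta> k) (\<omega>B j) \<and>
          Re (wper c black (\<beta> j) (\<omega>B k)) = 0 \<and>
          wper c black (\<beta> j) (\<omega>B k) = wper c black (\<beta> k) (\<omega>B j)"
      unfolding eBB[OF j k] eWB[OF j k] eBW[OF j k] eWW[OF j k] eBB[OF k j] eWB[OF k j]
      using WWBB WBBW BBreal skew ReWB symWB by simp
  qed
qed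

end
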